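(* Let $d\ge 1$ and let $(K_1,g_1)$ and $(K_2,g_2)$ be weighted simplicial complexes in $\mathbb{R}^d$. If $\mathrm{WECT}_{K_1,g_1}(v,r)=\mathrm{WECT}_{K_2,g_2}(v,r)$ for all $(v,r)\in S^{d-1}\times\mathbb{R}$, then $(K_1,g_1)=(K_2,g_2)$ in the sense that the associated functions agree: $\hat g_1(x)=\hat g_2(x)$ for all $x\in\mathbb{R}^d$ (in particular the underlying point sets $|K_1|$ and $|K_2|$ coincide).
   Context: A weighted simplicial complex in $\mathbb{R}^d$ is a pair $(K,g)$ where $K$ is a finite simplicial complex embedded in $\mathbb{R}^d$ (a finite set of geometric simplices in $\mathbb{R}^d$, closed under taking faces, any two of which intersect in a common face or not at all) and $g:K\to\mathbb{N}=\{1,2,3,\dots\}$ is an arbitrary function. $K^{\ell}$ denotes the set of $\ell$-dimensional simplices of $K$. For a subcomplex $L\subseteq K$, the weighted Euler characteristic is $\chi^w(L,g)=\sum_{\ell\ge 0}(-1)^{\ell}\sum_{\sigma\in L^{\ell}}g(\sigma)$ (equal to $0$ for $L=\emptyset$). For a direction $v\in S^{d-1}$, define $p_v:K\to\mathbb{R}$ by $p_v(\sigma)=v\cdot\sigma$ for vertices $\sigma\in K^0$ and, inductively, $p_v(\sigma)=\max\{p_v(\tau)\mid \tau \text{ a proper face of }\sigma\}$ for higher-dimensional simplices (equivalently, the maximum of $v\cdot w$ over the vertices $w$ of $\sigma$); each sublevel set $p_v^{-1}((-\infty,r])$ is a subcomplex of $K$. The Weighted Euler Characteristic Transform of $(K,g)$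 is the function $\mathrm{WECT}_{K,g}:S^{d-1}\times\mathbb{R}\to\mathbb{Z}$, $$\mathrm{WECT}_{K,g}(v,r)=\chi^w\big(p_v^{-1}((-\infty,r]),\,g|_{p_v^{-1}((-\infty,r])}\big).$$ The function associated to $(K,g)$ is $\hat g:\mathbb{R}^d\to\mathbb{Z}_{\ge 0}$ defined by $\hat g(x)=g(\sigma)$ if $x$ lies in the relative interior of the (unique) simplex $\sigma\in K$ whose relative interior contains $x$, and $\hat g(x)=0$ if $x\notin |K|=\bigcup_{\sigma\in K}\sigma$. *)

theory Defs
  imports "HOL-Analysis.Analysis"
begin

text \<open>A geometric simplex is represented by its (finite, nonempty, affinely
independent) vertex set; the geometric simplex itself is its convex hull.
Its dimension is the number of vertices minus one.\<close>

definition is_simplex :: "'a::euclidean_space set \<Rightarrow> bool" where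
  "is_simplex S \<longleftrightarrow> finite S \<and> S \<noteq> {} \<and> \<not> affine_dependent S"

definition simplex_dim :: "'a set \<Rightarrow> nat" where
  "simplex_dim S = card S - 1"

definition simplicial_complex :: "'a::euclidean_space set set \<Rightarrow> bool" where
  "simplicial_complex K \<longleftrightarrow>
     finite K \<and>
     (\<forall>S\<in>K. is_simplex S) \<and>
     (\<forall>S\<in>K. \<forall>T. T \<subseteq> S \<and> T \<noteq> {} \<longrightarrow> T \<in> K) \<and>
     (\<forall>S\<in>K. \<forall>T\<in>K. convex hull S \<inter> convex hull T = convex hull (S \<inter> T))"

definition weighted_complex :: "'a::euclidean_space set set \<Rightarrow> ('a set \<Rightarrow> nat) \<Rightarrow> bool" where
  "weighted_complex K g \<longleftrightarrow> simplicial_complex K \<and> (\<forall>S\<in>K. g S \<ge> 1)"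

definition height :: "'a::euclidean_space \<Rightarrow> 'a set \<Rightarrow> real" where
  "height v S = Max ((\<lambda>w. v \<bullet> w) ` S)"

definition sublevel :: "'a::euclidean_space set set \<Rightarrow> 'a \<Rightarrow> real \<Rightarrow> 'a set set" where
  "sublevel K v r = {S \<in> K. height v S \<le> r}"

definition weighted_euler_char :: "'a set set \<Rightarrow> ('a set \<Rightarrow> nat) \<Rightarrow> int" where
  "weighted_euler_char L g = (\<Sum>S\<in>L. (-1) ^ simplex_dim S * int (g S))"

definition WECT :: "'a::euclidean_space set set \<Rightarrow> ('a set \<Rightarrow> nat) \<Rightarrow> 'a \<Rightarrow> real \<Rightarrow> int" where
  "WECT K g v r = weighted_euler_char (sublevel K v r) g"

definition underlying_space :: "'a::euclidean_space set set \<Rightarrow> 'a set" where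
  "underlying_space K = (\<Union>S\<in>K. convex hull S)"

definition assoc_fun :: "'a::euclidean_space set set \<Rightarrow> ('a set \<Rightarrow> nat) \<Rightarrow> 'a \<Rightarrow> nat" where
  "assoc_fun K g x =
     (if \<exists>S\<in>K. x \<in> rel_interior (convex hull S)
      then g (THE S. S \<in> K \<and> x \<in> rel_interior (convex hull S))
      else 0)"

end

theory Submission
  imports Defs
begin

lemma ro_extend:
  fixes C :: "'a::euclidean_space set"
  assumes "rel_interior C = C" "p \<in> C" "q \<in> C"
  shows "\<exists>e>0. p + e *\<^sub>R (p - q) \<in> C"
proof (cases "p = q")
  case True then show ?thesis using assms by (intro exI[of _ 1]) auto
next
  case False
  from assms have "p \<in> rel_interior C" by simp
  then obtain d where d: "d > 0" "cball p d \<inter> affine hull C \<subseteq> C"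
    using mem_rel_interior_cball by blast
  define e where "e = d / norm (p - q)"
  have np: "norm (p - q) > 0" using False by simp
  have e: "e > 0" using d np by (simp add: e_def)
  have "p + e *\<^sub>R (p - q) = (1 + e) *\<^sub>R p + (- e) *\<^sub>R q"
    by (simp add: algebra_simps)
  also have "\<dots> \<in> affine hull C"
    by (rule mem_affine) (use assms in \<open>auto intro: hull_inc\<close>)
  finally have aff: "p + e *\<^sub>R (p - q) \<in> affine hull C" .
  have "dist p (p + e *\<^sub>R (p - q)) = e * norm (p - q)"
    using e by (simp add: dist_norm)
  also have "\<dots> = d" using np by (simp add: e_def)
  finally have "p + e *\<^sub>R (p - q) \<in> cball p d" by simp
  with aff d e show ?thesis by blast
qed

lemma ro_face:
  fixes C :: "'a::euclidean_space set"
  assumes "rel_interior C = C" "\<forall>x\<in>C. a \<bullet> x \<le> b" "p \<in> C" "a \<bullet> p = b" "x \<in> C"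
  shows "a \<bullet> x = b"
proof -
  obtain e where e: "e > 0" "p + e *\<^sub>R (p - x) \<in> C" using ro_extend[OF assms(1,3,5)] by blast
  then have "a \<bullet> (p + e *\<^sub>R (p - x)) \<le> b" using assms(2) by blast
  then have "b + e * (b - a \<bullet> x) \<le> b" using assms(4) by (simp add: inner_simps)
  then have "a \<bullet> x \<ge> b" using e by (simp add: mult_le_0_iff)
  with assms show ?thesis by force
qed

lemma relint_meets_hyp:
  fixes P :: "'a::euclidean_space set"
  assumes "convex P" "p \<in> closure P" "q \<in> closure P" "a \<bullet> p < b" "b < a \<bullet> q"
  shows "rel_interior P \<inter> {x. a \<bullet> x = b} \<noteq> {}"
proof -
  have "P \<noteq> {}" using assms(2) by auto
  then obtain z where z: "z \<in> rel_interior P" using assms(1) rel_interior_eq_empty by blast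
  consider "a \<bullet> z = b" | "a \<bullet> z > b" | "a \<bullet> z < b" by linarith
  then show ?thesis
  proof cases
    case 1 then show ?thesis using z by blast
  next
    case 2
    define t where "t = (a \<bullet> z - b) / (a \<bullet> z - a \<bullet> p)"
    have t: "0 < t" "t < 1" using 2 assms(4) by (auto simp: t_def divide_simps)
    have "z \<noteq> p" using 2 assms(4) by auto
    then have "(1 - t) *\<^sub>R z + t *\<^sub>R p \<in> open_segment z p" using t by (auto simp: in_segment)
    then have m: "(1 - t) *\<^sub>R z + t *\<^sub>R p \<in> rel_interior P"
      using rel_interior_closure_convex_segment[OF assms(1) z assms(2)] by blast
    have tt: "t * (a \<bullet> z - a \<bullet> p) = a \<bullet> z - b" using 2 assms(4) by (simp add: t_def)
    have "a \<bullet> ((1 - t) *\<^sub>R z + t *\<^sub>R p) = a \<bullet> z - t * (a \<bullet> z - a \<bullet> p)"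
      by (simp add: inner_simps algebra_simps)
    then have "a \<bullet> ((1 - t) *\<^sub>R z + t *\<^sub>R p) = b" using tt by simp
    with m show ?thesis by blast
  next
    case 3
    define t where "t = (b - a \<bullet> z) / (a \<bullet> q - a \<bullet> z)"
    have t: "0 < t" "t < 1" using 3 assms(5) by (auto simp: t_def divide_simps)
    have "z \<noteq> q" using 3 assms(5) by auto
    then have "(1 - t) *\<^sub>R z + t *\<^sub>R q \<in> open_segment z q" using t by (auto simp: in_segment)
    then have m: "(1 - t) *\<^sub>R z + t *\<^sub>R q \<in> rel_interior P"
      using rel_interior_closure_convex_segment[OF assms(1) z assms(3)] by blast
    have tt: "t * (a \<bullet> q - a \<bullet> z) = b - a \<bullet> z" using 3 assms(5) by (simp add: t_def)
    have "a \<bullet> ((1 - t) *\<^sub>R z + t *\<^sub>R q) = a \<bullet> z + t * (a \<bullet> q - a \<bullet> z)"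
      by (simp add: inner_simps algebra_simps)
    then have "a \<bullet> ((1 - t) *\<^sub>R z + t *\<^sub>R q) = b" using tt by simp
    with m show ?thesis by blast
  qed
qed

lemma aff_dim_hyp:
  fixes C :: "'a::euclidean_space set"
  assumes "convex C" "rel_interior C \<inter> {x. a \<bullet> x = b} \<noteq> {}" "\<not> C \<subseteq> {x. a \<bullet> x = b}"
  shows "aff_dim (C \<inter> {x. a \<bullet> x = b}) = aff_dim C - 1"
proof -
  let ?T = "{x. a \<bullet> x = b}"
  have cv: "convex (C \<inter> ?T)" using assms(1) convex_hyperplane convex_Int by blast
  have ri: "rel_interior (C \<inter> ?T) = rel_interior C \<inter> ?T"
    using convex_affine_rel_interior_Int[OF assms(1) affine_hyperplane assms(2)] .
  have "openin (top_of_set (affine hull C)) (rel_interior C)" by (rule openin_rel_interior)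
  then obtain U0 where U0: "open U0" "rel_interior C = affine hull C \<inter> U0"
    using openin_open by metis
  have "openin (top_of_set (affine hull C \<inter> ?T)) (rel_interior C \<inter> ?T)"
    unfolding openin_open
  proof (intro exI conjI)
    show "open U0" by (rule U0)
    show "rel_interior C \<inter> ?T = affine hull C \<inter> ?T \<inter> U0" using U0(2) by (simp add: Int_ac)
  qed
  then have "aff_dim (rel_interior C \<inter> ?T) = aff_dim (affine hull C \<inter> ?T)"
    proof (rule aff_dim_openin)
    show "affine (affine hull C \<inter> ?T)" by (intro affine_Int affine_affine_hull affine_hyperplane)
  qed (fact assms(2))
  also have "\<dots> = aff_dim (affine hull C) - 1"
  proof -
    have "rel_interior C \<subseteq> affine hull C" using rel_interior_subset[of C] hull_subset[of C affine] by (rule order_trans)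
    then have "affine hull C \<inter> ?T \<noteq> {}" using assms(2) by blast
    moreover have "\<not> affine hull C \<subseteq> ?T" using assms(3) hull_subset[of C affine] by (meson order_trans)
    ultimately show ?thesis using aff_dim_affine_Int_hyperplane[OF affine_affine_hull[of C], where a=a and b=b]
      by (simp only: if_False aff_dim_affine_hull)
  qed
  finally have "aff_dim (rel_interior C \<inter> ?T) = aff_dim C - 1" by simp
  then show ?thesis using ri rel_interior_aff_dim[OF cv] by metis
qed

definition wsd :: "'a::euclidean_space set \<Rightarrow> int" where
  "wsd X = (-1) ^ nat (aff_dim X + 1)"

definition wdat :: "'a::euclidean_space set set \<Rightarrow> ('a set \<Rightarrow> int) \<Rightarrow> 'a \<Rightarrow> real \<Rightarrow> int" where
  "wdat F c v r = (\<Sum>P\<in>F. wsd P * c P * (if P \<subseteq> {y. v \<bullet> y < r} then 1 else 0))"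

definition ext :: "'a::euclidean_space set \<Rightarrow> 'a set" where
  "ext P = {x. x extreme_point_of P}"

lemma conv_top: "convex ({y. v \<bullet> y < v \<bullet> w} \<union> {w})"
  unfolding convex_def
proof (intro ballI allI impI)
  fix x y and u t :: real
  assume x: "x \<in> {y. v \<bullet> y < v \<bullet> w} \<union> {w}" and y: "y \<in> {y. v \<bullet> y < v \<bullet> w} \<union> {w}"
    and u: "0 \<le> u" and t: "0 \<le> t" and ut: "u + t = 1"
  show "u *\<^sub>R x + t *\<^sub>R y \<in> {y. v \<bullet> y < v \<bullet> w} \<union> {w}"
  proof (cases "x = w")
    case True
    show ?thesis
    proof (cases "y = w")
      case True with \<open>x = w\<close> ut show ?thesis by (simp add: scaleR_left_distrib[symmetric])
    next
      case False
      then have yy: "v \<bullet> y < v \<bullet> w" using y by auto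
      show ?thesis
      proof (cases "t = 0")
        case True then show ?thesis using ut \<open>x = w\<close> by simp
      next
        case False
        then have "t > 0" using t by simp
        have "v \<bullet> (u *\<^sub>R x + t *\<^sub>R y) = u * (v \<bullet> w) + t * (v \<bullet> y)" using \<open>x = w\<close> by (simp add: inner_simps)
        also have "\<dots> < u * (v \<bullet> w) + t * (v \<bullet> w)" using yy \<open>t > 0\<close> by simp
        also have "\<dots> = v \<bullet> w" using ut by (simp add: distrib_right[symmetric])
        finally show ?thesis by simp
      qed
    qed
  next
    case False
    then have xx: "v \<bullet> x < v \<bullet> w" using x by auto
    have yy: "v \<bullet> y \<le> v \<bullet> w" using y by auto
    show ?thesis
    proof (cases "u = 0")
      case True then have "t = 1" using ut by simp
      with True show ?thesis using y by simp
    next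
      case False
      then have "u > 0" using u by simp
      have "v \<bullet> (u *\<^sub>R x + t *\<^sub>R y) = u * (v \<bullet> x) + t * (v \<bullet> y)" by (simp add: inner_simps)
      also have "\<dots> < u * (v \<bullet> w) + t * (v \<bullet> w)"
        using xx yy \<open>u > 0\<close> t by (intro add_less_le_mono mult_strict_left_mono mult_left_mono) auto
      also have "\<dots> = v \<bullet> w" using ut by (simp add: distrib_right[symmetric])
      finally show ?thesis by simp
    qed
  qed
qed

lemma ext_props:
  fixes P :: "'a::euclidean_space set"
  assumes "polytope P"
  shows "finite (ext P)" "P = convex hull (ext P)" "ext P \<subseteq> P"
proof -
  obtain S where S: "finite S" "P = convex hull S" using assms unfolding polytope_def by blast
  have "ext P \<subseteq> S" unfolding ext_def S(2) by (rule extreme_points_of_convex_hull)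
  then show "finite (ext P)" using S(1) finite_subset by blast
  show "P = convex hull (ext P)" unfolding ext_def using Krein_Milman_polytope[OF S(1)] S(2) by simp
  show "ext P \<subseteq> P" unfolding ext_def extreme_point_of_def by blast
qed

lemma sub_open_iff:
  fixes P :: "'a::euclidean_space set"
  assumes "polytope P"
  shows "P \<subseteq> {y. v \<bullet> y < r} \<longleftrightarrow> (\<forall>u\<in>ext P. v \<bullet> u < r)"
proof
  assume "P \<subseteq> {y. v \<bullet> y < r}" then show "\<forall>u\<in>ext P. v \<bullet> u < r" using ext_props(3)[OF assms] by blast
next
  assume "\<forall>u\<in>ext P. v \<bullet> u < r"
  then have "ext P \<subseteq> {y. v \<bullet> y < r}" by blast
  then have "convex hull (ext P) \<subseteq> {y. v \<bullet> y < r}" by (rule hull_minimal) (rule convex_halfspace_lt)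
  then show "P \<subseteq> {y. v \<bullet> y < r}" using ext_props(2)[OF assms] by simp
qed

lemma fin_pos_lb:
  fixes f :: "'b \<Rightarrow> real"
  assumes "finite S" "\<And>x. x \<in> S \<Longrightarrow> 0 < f x"
  shows "\<exists>e>0. \<forall>x\<in>S. e \<le> f x"
proof (cases "S = {}")
  case True then show ?thesis by (intro exI[of _ 1]) auto
next
  case False
  have "Min (f ` S) > 0" using assms False by (simp add: Min_gr_iff)
  moreover have "\<forall>x\<in>S. Min (f ` S) \<le> f x" using assms(1) by simp
  ultimately show ?thesis by blast
qed

lemma norm_top:
  fixes u w :: "'a::euclidean_space"
  assumes "norm u \<le> norm w" "u \<noteq> w"
  shows "w \<bullet> u < w \<bullet> w"
proof -
  have "0 < (norm (w - u))\<^sup>2" using assms(2) by simp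
  also have "(norm (w - u))\<^sup>2 = w \<bullet> w - 2 * (w \<bullet> u) + u \<bullet> u"
    by (simp add: power2_norm_eq_inner inner_diff inner_commute)
  finally have 1: "0 < w \<bullet> w - 2 * (w \<bullet> u) + u \<bullet> u" .
  have "(norm u)\<^sup>2 \<le> (norm w)\<^sup>2" using assms(1) by (simp add: power_mono)
  then have "u \<bullet> u \<le> w \<bullet> w" by (simp add: power2_norm_eq_inner)
  with 1 show ?thesis by linarith
qed

lemma wdat_trivial:
  fixes F :: "'a::euclidean_space set set"
  assumes "finite F" "\<forall>v r. wdat F c v r = 0" "\<forall>P\<in>F. P \<noteq> {} \<longrightarrow> c P = 0"
  shows "\<forall>P\<in>F. c P = 0"
proof
  fix P assume P: "P \<in> F"
  show "c P = 0"
  proof (cases "P = {}")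
    case False then show ?thesis using assms(3) P by blast
  next
    case True
    have "wdat F c 0 0 = (\<Sum>Q\<in>F. if Q = {} then c {} else 0)"
      unfolding wdat_def
    proof (rule sum.cong)
      fix Q assume "Q \<in> F"
      show "wsd Q * c Q * (if Q \<subseteq> {y. 0 \<bullet> y < (0::real)} then 1 else 0) = (if Q = {} then c {} else 0)"
        using assms(3) \<open>Q \<in> F\<close> by (auto simp: wsd_def)
    qed simp
    also have "\<dots> = c {}" using P True assms(1) by (simp add: sum.delta)
    finally show ?thesis using assms(2) True by simp
  qed
qed

lemma coreA_step:
  fixes F :: "'a::euclidean_space set set" and c :: "'a set \<Rightarrow> int"
  assumes IH: "\<And>(F'::'a set set) (c'::'a set \<Rightarrow> int). finite F' \<Longrightarrow> \<forall>P\<in>F'. polytope P \<Longrightarrow>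
        (\<forall>P\<in>F'. \<forall>Q\<in>F'. P \<noteq> Q \<longrightarrow> rel_interior P \<inter> rel_interior Q = {}) \<Longrightarrow>
        (\<forall>v r. wdat F' c' v r = 0) \<Longrightarrow> (\<forall>P\<in>F'. aff_dim P < int n) \<Longrightarrow> \<forall>P\<in>F'. c' P = 0"
    and fin: "finite F" and poly: "\<forall>P\<in>F. polytope P"
    and disj: "\<forall>P\<in>F. \<forall>Q\<in>F. P \<noteq> Q \<longrightarrow> rel_interior P \<inter> rel_interior Q = {}"
    and dat: "\<forall>v r. wdat F c v r = 0"
    and dim: "\<forall>P\<in>F. aff_dim P < int (Suc n)"
  shows "\<forall>P\<in>F. c P = 0"
proof -
  define F0 where "F0 = {P\<in>F. c P \<noteq> 0 \<and> P \<noteq> {}}"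
  have "F0 = {}"
  proof (rule ccontr)
    assume F0ne: "F0 \<noteq> {}"
    have F0F: "F0 \<subseteq> F" unfolding F0_def by blast
    have finF0: "finite F0" using fin F0F finite_subset by blast
    have polyF0: "\<And>P. P \<in> F0 \<Longrightarrow> polytope P" using poly F0F by blast
    define V where "V = \<Union>(ext ` F0)"
    have finV: "finite V" unfolding V_def using finF0 ext_props(1)[OF polyF0] by blast
    have extV: "\<And>P. P \<in> F0 \<Longrightarrow> ext P \<subseteq> V" unfolding V_def by blast
    have Vne: "V \<noteq> {}"
    proof -
      obtain P where P: "P \<in> F0" using F0ne by blast
      have "P \<noteq> {}" using P F0_def by blast
      then have "ext P \<noteq> {}" using ext_props(2)[OF polyF0[OF P]] by auto
      then show ?thesis using extV[OF P] by blast
    qed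
    obtain w where wV: "w \<in> V" and wmax: "\<forall>u\<in>V. norm u \<le> norm w"
    proof -
      have "finite (norm ` V)" "norm ` V \<noteq> {}" using finV Vne by auto
      then have "Max (norm ` V) \<in> norm ` V" by (rule Max_in)
      then obtain w where "w \<in> V" "norm w = Max (norm ` V)" by auto
      moreover have "\<forall>u\<in>V. norm u \<le> Max (norm ` V)" using finV by simp
      ultimately show ?thesis using that by metis
    qed
    define v0 where "v0 = w"
    have top: "\<And>u. u \<in> V \<Longrightarrow> u \<noteq> w \<Longrightarrow> v0 \<bullet> u < v0 \<bullet> w"
      unfolding v0_def using wmax norm_top by blast
    obtain \<delta> where \<delta>: "\<delta> > 0" and \<delta>gap: "\<forall>u\<in>V - {w}. \<delta> \<le> (v0 \<bullet> w - v0 \<bullet> u) / 2"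
      using fin_pos_lb[of "V - {w}" "\<lambda>u. (v0 \<bullet> w - v0 \<bullet> u) / 2"] finV top by auto
    have gap: "\<And>u. u \<in> V \<Longrightarrow> u \<noteq> w \<Longrightarrow> v0 \<bullet> u < v0 \<bullet> w - \<delta>"
      using \<delta>gap top by force
    define A where "A = {y. v0 \<bullet> y = v0 \<bullet> w - \<delta>}"
    have wA: "w \<notin> A" unfolding A_def using \<delta> by simp
    have subtop: "\<And>P. P \<in> F0 \<Longrightarrow> P \<subseteq> {y. v0 \<bullet> y < v0 \<bullet> w} \<union> {w}"
    proof -
      fix P assume P: "P \<in> F0"
      have "ext P \<subseteq> {y. v0 \<bullet> y < v0 \<bullet> w} \<union> {w}" using extV[OF P] top by blast
      then have "convex hull (ext P) \<subseteq> {y. v0 \<bullet> y < v0 \<bullet> w} \<union> {w}"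
        by (rule hull_minimal) (rule conv_top)
      then show "P \<subseteq> {y. v0 \<bullet> y < v0 \<bullet> w} \<union> {w}" using ext_props(2)[OF polyF0[OF P]] by simp
    qed
    have wext: "\<And>P. P \<in> F0 \<Longrightarrow> w \<in> P \<Longrightarrow> w \<in> ext P"
    proof -
      fix P assume P: "P \<in> F0" and wP: "w \<in> P"
      have "w extreme_point_of P"
        unfolding extreme_point_of_def
      proof (intro conjI ballI notI)
        show "w \<in> P" by (rule wP)
      next
        fix a b assume a: "a \<in> P" and b: "b \<in> P" and ws: "w \<in> open_segment a b"
        then obtain u where u: "0 < u" "u < 1" "w = (1 - u) *\<^sub>R a + u *\<^sub>R b" and ab: "a \<noteq> b"
          by (auto simp: in_segment)
        have ha: "v0 \<bullet> a \<le> v0 \<bullet> w" and hb: "v0 \<bullet> b \<le> v0 \<bullet> w"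
          using subtop[OF P] a b by force+
        have "v0 \<bullet> w = (1 - u) * (v0 \<bullet> a) + u * (v0 \<bullet> b)" using u(3) by (simp add: inner_simps)
        then have e0: "(1 - u) * (v0 \<bullet> w - v0 \<bullet> a) + u * (v0 \<bullet> w - v0 \<bullet> b) = 0"
          by (simp add: algebra_simps)
        have n1: "(1 - u) * (v0 \<bullet> w - v0 \<bullet> a) \<ge> 0" using ha u by simp
        have n2: "u * (v0 \<bullet> w - v0 \<bullet> b) \<ge> 0" using hb u by simp
        have "(1 - u) * (v0 \<bullet> w - v0 \<bullet> a) = 0" "u * (v0 \<bullet> w - v0 \<bullet> b) = 0"
          using e0 n1 n2 by linarith+
        then have "v0 \<bullet> a = v0 \<bullet> w \<and> v0 \<bullet> b = v0 \<bullet> w" using u(1,2) by simp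
        then have "a = w" "b = w" using subtop[OF P] a b by force+
        with ab show False by simp
      qed
      then show "w \<in> ext P" unfolding ext_def by simp
    qed
    have STAR: "(\<Sum>P\<in>F. wsd P * c P * (if w \<in> P \<and> (\<forall>u\<in>ext P - {w}. v \<bullet> u < v \<bullet> w) then 1 else 0)) = 0"
      for v
    proof -
      define h where "h u = v0 \<bullet> w - v0 \<bullet> u" for u
      have hpos: "\<And>u. u \<in> V \<Longrightarrow> u \<noteq> w \<Longrightarrow> h u > 0" using top unfolding h_def by fastforce
      obtain \<epsilon> where \<epsilon>: "\<epsilon> > 0"
        and \<epsilon>b: "\<forall>u\<in>{u\<in>V-{w}. v \<bullet> u < v \<bullet> w}. \<epsilon> \<le> (v \<bullet> w - v \<bullet> u) / (2 * h u)"
        using fin_pos_lb[of "{u\<in>V-{w}. v \<bullet> u < v \<bullet> w}" "\<lambda>u. (v \<bullet> w - v \<bullet> u) / (2 * h u)"] finV hpos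
        by (auto intro!: divide_pos_pos)
      define v' where "v' = v - \<epsilon> *\<^sub>R v0"
      define t where "t = v' \<bullet> w"
      have dif: "\<And>u. v' \<bullet> u - t = (v \<bullet> u - v \<bullet> w) + \<epsilon> * h u"
        by (simp add: v'_def t_def h_def inner_simps algebra_simps)
      have lt: "v' \<bullet> u < t" if u: "u \<in> V" "u \<noteq> w" "v \<bullet> u < v \<bullet> w" for u
      proof -
        have "\<epsilon> \<le> (v \<bullet> w - v \<bullet> u) / (2 * h u)" using \<epsilon>b u by blast
        then have "\<epsilon> * (2 * h u) \<le> v \<bullet> w - v \<bullet> u" using hpos[OF u(1,2)] by (simp add: pos_le_divide_eq)
        moreover have "\<epsilon> * h u > 0" using hpos[OF u(1,2)] \<epsilon> by simp
        ultimately have "\<epsilon> * h u < v \<bullet> w - v \<bullet> u" by (simp add: algebra_simps)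
        then show ?thesis using dif[of u] by linarith
      qed
      have gt: "v' \<bullet> u > t" if u: "u \<in> V" "u \<noteq> w" "\<not> v \<bullet> u < v \<bullet> w" for u
      proof -
        have "\<epsilon> * h u > 0" using hpos[OF u(1,2)] \<epsilon> by simp
        then show ?thesis using dif[of u] u(3) by linarith
      qed
      obtain \<eta> where \<eta>: "\<eta> > 0" and \<eta>b: "\<forall>u\<in>{u\<in>V. t < v' \<bullet> u}. \<eta> \<le> (v' \<bullet> u - t) / 2"
        using fin_pos_lb[of "{u\<in>V. t < v' \<bullet> u}" "\<lambda>u. (v' \<bullet> u - t) / 2"] finV by auto
      have key: "(v' \<bullet> u < t + \<eta> \<longleftrightarrow> u = w \<or> v \<bullet> u < v \<bullet> w) \<and> (v' \<bullet> u < t \<longleftrightarrow> u \<noteq> w \<and> v \<bullet> u < v \<bullet> w)"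
        if u: "u \<in> V" for u
      proof (cases "u = w")
        case True then show ?thesis using \<eta> t_def by simp
      next
        case False
        show ?thesis
        proof (cases "v \<bullet> u < v \<bullet> w")
          case True then show ?thesis using lt[OF u False True] \<eta> False by simp
        next
          case nl: False
          have g: "v' \<bullet> u > t" using gt[OF u False nl] .
          then have "\<eta> \<le> (v' \<bullet> u - t) / 2" using \<eta>b u by blast
          then have "v' \<bullet> u \<ge> t + 2 * \<eta>" by simp
          then show ?thesis using nl \<eta> g False by simp
        qed
      qed
      have "wdat F c v' (t + \<eta>) - wdat F c v' t =
          (\<Sum>P\<in>F. wsd P * c P * (if w \<in> P \<and> (\<forall>u\<in>ext P - {w}. v \<bullet> u < v \<bullet> w) then 1 else 0))"
        unfolding wdat_def sum_subtractf[symmetric]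
      proof (rule sum.cong[OF refl])
        fix P assume P: "P \<in> F"
        show "wsd P * c P * (if P \<subseteq> {y. v' \<bullet> y < t + \<eta>} then 1 else 0) -
              wsd P * c P * (if P \<subseteq> {y. v' \<bullet> y < t} then 1 else 0) =
              wsd P * c P * (if w \<in> P \<and> (\<forall>u\<in>ext P - {w}. v \<bullet> u < v \<bullet> w) then 1 else 0)"
        proof (cases "P \<in> F0")
          case False
          then have "c P = 0 \<or> P = {}" using P F0_def by blast
          then show ?thesis by auto
        next
          case True
          have kP: "\<forall>u\<in>ext P. (v' \<bullet> u < t + \<eta> \<longleftrightarrow> u = w \<or> v \<bullet> u < v \<bullet> w) \<and> (v' \<bullet> u < t \<longleftrightarrow> u \<noteq> w \<and> v \<bullet> u < v \<bullet> w)"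
            using key extV[OF True] by blast
          have e1: "P \<subseteq> {y. v' \<bullet> y < t + \<eta>} \<longleftrightarrow> (\<forall>u\<in>ext P - {w}. v \<bullet> u < v \<bullet> w)"
            unfolding sub_open_iff[OF polyF0[OF True]] using kP by blast
          have e2: "P \<subseteq> {y. v' \<bullet> y < t} \<longleftrightarrow> w \<notin> ext P \<and> (\<forall>u\<in>ext P - {w}. v \<bullet> u < v \<bullet> w)"
            unfolding sub_open_iff[OF polyF0[OF True]] using kP by blast
          have e3: "w \<in> P \<longleftrightarrow> w \<in> ext P" using wext[OF True] ext_props(3)[OF polyF0[OF True]] by blast
          show ?thesis
            by (cases "w \<in> ext P"; cases "\<forall>u\<in>ext P - {w}. v \<bullet> u < v \<bullet> w"; simp only: e1 e2 e3; simp)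
        qed
      qed
      then show ?thesis using dat by simp
    qed
    define G where "G = {P\<in>F0. w \<in> P}"
    have GF0: "G \<subseteq> F0" unfolding G_def by blast
    have polyG: "\<And>P. P \<in> G \<Longrightarrow> polytope P" using GF0 polyF0 by blast
    have convG: "\<And>P. P \<in> G \<Longrightarrow> convex P" using polyG polytope_imp_convex by blast
    have wG: "\<And>P. P \<in> G \<Longrightarrow> w \<in> P" unfolding G_def by blast
    have other: "\<exists>u\<in>ext P. u \<noteq> w" if P: "P \<in> G" "P \<noteq> {w}" for P
    proof (rule ccontr)
      assume "\<not> ?thesis"
      then have "ext P \<subseteq> {w}" by blast
      then have "convex hull (ext P) \<subseteq> convex hull {w}" by (rule hull_mono)
      then have "P \<subseteq> {w}" using ext_props(2)[OF polyG[OF P(1)]] by simp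
      then show False using wG[OF P(1)] P(2) by blast
    qed
    have seg: "w + s *\<^sub>R (u - w) \<in> P \<inter> A"
      if P: "P \<in> G" and u: "u \<in> ext P" "u \<noteq> w" and s: "s = \<delta> / (v0 \<bullet> w - v0 \<bullet> u)" for P u s
    proof -
      have uV: "u \<in> V" using u extV GF0 P by blast
      have hg: "v0 \<bullet> u < v0 \<bullet> w - \<delta>" using gap[OF uV u(2)] .
      then have hpos: "v0 \<bullet> w - v0 \<bullet> u > 0" using \<delta> by simp
      have sh: "s * (v0 \<bullet> w - v0 \<bullet> u) = \<delta>" using s hpos by simp
      have s0: "0 \<le> s" using s \<delta> hpos by simp
      have "s * (v0 \<bullet> w - v0 \<bullet> u) < 1 * (v0 \<bullet> w - v0 \<bullet> u)" using sh hg by simp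
      then have "s < 1" using mult_less_cancel_right_pos[OF hpos, of s 1] by blast
      with s0 have s01: "0 \<le> s" "s \<le> 1" by auto
      have eq: "w + s *\<^sub>R (u - w) = (1 - s) *\<^sub>R w + s *\<^sub>R u" by (simp add: algebra_simps)
      have uP: "u \<in> P" using u(1) ext_props(3)[OF polyG[OF P]] by blast
      have "(1 - s) *\<^sub>R w + s *\<^sub>R u \<in> P"
        using convexD[OF convG[OF P] wG[OF P] uP, of "1 - s" s] s01 by simp
      moreover have "v0 \<bullet> (w + s *\<^sub>R (u - w)) = v0 \<bullet> w - \<delta>"
        using sh by (simp add: inner_simps algebra_simps)
      ultimately show ?thesis unfolding A_def using eq by auto
    qed
    have PA_empty: "P \<inter> A = {} \<longleftrightarrow> P = {w}" if P: "P \<in> G" for P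
    proof
      assume "P = {w}" then show "P \<inter> A = {}" using wA by simp
    next
      assume e: "P \<inter> A = {}"
      show "P = {w}"
      proof (rule ccontr)
        assume "P \<noteq> {w}"
        then obtain u where "u \<in> ext P" "u \<noteq> w" using other P by blast
        then show False using seg[OF P, of u] e by blast
      qed
    qed
    have ri_meet: "rel_interior P \<inter> A \<noteq> {}" if P: "P \<in> G" "P \<noteq> {w}" for P
    proof -
      obtain u where u: "u \<in> ext P" "u \<noteq> w" using other P by blast
      have uV: "u \<in> V" using u extV GF0 P by blast
      have cl: "closure P = P" using polyG[OF P(1)] polytope_imp_closed closure_closed by blast
      have uP: "u \<in> P" using u(1) ext_props(3)[OF polyG[OF P(1)]] by blast
      show ?thesis unfolding A_def
        by (rule relint_meets_hyp[OF convG[OF P(1)], of u w])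
           (use cl uP wG[OF P(1)] gap[OF uV u(2)] \<delta> in auto)
    qed
    have riPA: "rel_interior (P \<inter> A) = rel_interior P \<inter> A" if P: "P \<in> G" "P \<noteq> {w}" for P
      using convex_affine_rel_interior_Int[OF convG[OF P(1)] _ ri_meet[OF P]] unfolding A_def
      by (simp add: affine_hyperplane)
    have dimPA: "aff_dim (P \<inter> A) = aff_dim P - 1" if P: "P \<in> G" "P \<noteq> {w}" for P
    proof -
      have "\<not> P \<subseteq> A" using wG[OF P(1)] wA by blast
      then show ?thesis using aff_dim_hyp[OF convG[OF P(1)], of v0 "v0 \<bullet> w - \<delta>"] ri_meet[OF P]
        unfolding A_def by blast
    qed
    have sdPA: "wsd (P \<inter> A) = - wsd P" if P: "P \<in> G" for P
    proof (cases "P = {w}")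
      case True
      then show ?thesis using wA by (simp add: wsd_def)
    next
      case False
      have "P \<noteq> {}" using wG[OF P] by blast
      then have "aff_dim P \<ge> 0" using aff_dim_empty[of P] aff_dim_geq[of P] by linarith
      then have "nat (aff_dim P + 1) = Suc (nat (aff_dim P))" by simp
      then show ?thesis using dimPA[OF P False] by (simp add: wsd_def)
    qed
    have incl: "(P \<inter> A \<subseteq> {y. v \<bullet> y < r}) \<longleftrightarrow>
       (\<forall>u\<in>ext P - {w}. (v + ((r - v \<bullet> w) / \<delta>) *\<^sub>R v0) \<bullet> u < (v + ((r - v \<bullet> w) / \<delta>) *\<^sub>R v0) \<bullet> w)"
      if P: "P \<in> G" for P v r
    proof -
      define lam where "lam = (r - v \<bullet> w) / \<delta>"
      define vs where "vs = v + ((r - v \<bullet> w) / \<delta>) *\<^sub>R v0"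
      have vs': "vs = v + lam *\<^sub>R v0" unfolding vs_def lam_def ..
      have keyA: "vs \<bullet> y - vs \<bullet> w = v \<bullet> y - r" if y: "y \<in> A" for y
      proof -
        have hy: "v0 \<bullet> y - v0 \<bullet> w = - \<delta>" using y unfolding A_def by simp
        have "vs \<bullet> y - vs \<bullet> w = v \<bullet> y - v \<bullet> w + lam * (v0 \<bullet> y - v0 \<bullet> w)"
          unfolding vs' by (simp add: inner_simps algebra_simps)
        moreover have "lam * (v0 \<bullet> y - v0 \<bullet> w) = - (r - v \<bullet> w)" using \<delta> hy by (simp add: lam_def)
        ultimately show ?thesis by simp
      qed
      show ?thesis unfolding vs_def[symmetric]
      proof
        assume H: "\<forall>u\<in>ext P - {w}. vs \<bullet> u < vs \<bullet> w"
        have "ext P \<subseteq> {y. vs \<bullet> y < vs \<bullet> w} \<union> {w}" using H by blast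
        then have "convex hull (ext P) \<subseteq> {y. vs \<bullet> y < vs \<bullet> w} \<union> {w}"
          by (rule hull_minimal) (rule conv_top)
        then have Psub: "P \<subseteq> {y. vs \<bullet> y < vs \<bullet> w} \<union> {w}" using ext_props(2)[OF polyG[OF P]] by simp
        show "P \<inter> A \<subseteq> {y. v \<bullet> y < r}"
        proof
          fix y assume y: "y \<in> P \<inter> A"
          then have "y \<noteq> w" using wA by blast
          then have "vs \<bullet> y < vs \<bullet> w" using Psub y by blast
          then show "y \<in> {y. v \<bullet> y < r}" using keyA[of y] y by simp
        qed
      next
        assume H: "P \<inter> A \<subseteq> {y. v \<bullet> y < r}"
        show "\<forall>u\<in>ext P - {w}. vs \<bullet> u < vs \<bullet> w"
        proof
          fix u assume u: "u \<in> ext P - {w}"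
          define s where "s = \<delta> / (v0 \<bullet> w - v0 \<bullet> u)"
          have uV: "u \<in> V" using u extV GF0 P by blast
          have hpos: "v0 \<bullet> w - v0 \<bullet> u > 0" using gap[OF uV] u \<delta> by force
          have spos: "s > 0" using \<delta> hpos s_def by simp
          have ym: "w + s *\<^sub>R (u - w) \<in> P \<inter> A" using seg[OF P, of u s] u s_def by blast
          then have "v \<bullet> (w + s *\<^sub>R (u - w)) < r" using H by blast
          then have "vs \<bullet> (w + s *\<^sub>R (u - w)) - vs \<bullet> w < 0" using keyA[OF ym[THEN IntD2]] by simp
          then have "s * (vs \<bullet> u - vs \<bullet> w) < 0" by (simp add: inner_simps algebra_simps)
          then show "vs \<bullet> u < vs \<bullet> w" using spos by (simp add: mult_less_0_iff)
        qed
      qed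
    qed
    have inj: "inj_on (\<lambda>P. P \<inter> A) G"
    proof (rule inj_onI)
      fix P1 P2 assume P1: "P1 \<in> G" and P2: "P2 \<in> G" and eq: "P1 \<inter> A = P2 \<inter> A"
      show "P1 = P2"
      proof (cases "P1 = {w} \<or> P2 = {w}")
        case True
        then show ?thesis using PA_empty[OF P1] PA_empty[OF P2] eq by blast
      next
        case False
        then have n1: "P1 \<noteq> {w}" and n2: "P2 \<noteq> {w}" by auto
        have "rel_interior P1 \<inter> A = rel_interior P2 \<inter> A"
          using riPA[OF P1 n1] riPA[OF P2 n2] eq by simp
        then have "rel_interior P1 \<inter> rel_interior P2 \<noteq> {}" using ri_meet[OF P1 n1] by blast
        then show ?thesis using disj P1 P2 GF0 F0F by blast
      qed
    qed
    define F' where "F' = (\<lambda>P. P \<inter> A) ` G"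
    define c' where "c' Q = c (the_inv_into G (\<lambda>P. P \<inter> A) Q)" for Q
    have c'PA: "c' (P \<inter> A) = c P" if "P \<in> G" for P
      unfolding c'_def using the_inv_into_f_f[OF inj that] by simp
    have finG: "finite G" using finF0 GF0 finite_subset by blast
    have "\<forall>Q\<in>F'. c' Q = 0"
    proof (rule IH)
      show "finite F'" unfolding F'_def using finG by simp
      show "\<forall>Q\<in>F'. polytope Q" unfolding F'_def A_def
        using polytope_Int_polyhedron[OF polyG polyhedron_hyperplane] by blast
      show "\<forall>Q1\<in>F'. \<forall>Q2\<in>F'. Q1 \<noteq> Q2 \<longrightarrow> rel_interior Q1 \<inter> rel_interior Q2 = {}"
      proof (intro ballI impI)
        fix Q1 Q2 assume "Q1 \<in> F'" "Q2 \<in> F'" "Q1 \<noteq> Q2"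
        then obtain P1 P2 where P1: "P1 \<in> G" "Q1 = P1 \<inter> A" and P2: "P2 \<in> G" "Q2 = P2 \<inter> A"
          and ne: "P1 \<noteq> P2" unfolding F'_def by blast
        show "rel_interior Q1 \<inter> rel_interior Q2 = {}"
        proof (cases "P1 = {w} \<or> P2 = {w}")
          case True
          then show ?thesis using P1 P2 wA by auto
        next
          case False
          then have n1: "P1 \<noteq> {w}" and n2: "P2 \<noteq> {w}" by auto
          have "rel_interior P1 \<inter> rel_interior P2 = {}" using disj P1(1) P2(1) GF0 F0F ne by blast
          then show ?thesis using riPA[OF P1(1) n1] riPA[OF P2(1) n2] P1(2) P2(2) by blast
        qed
      qed
      show "\<forall>Q\<in>F'. aff_dim Q < int n"
      proof
        fix Q assume "Q \<in> F'"
        then obtain P where P: "P \<in> G" "Q = P \<inter> A" unfolding F'_def by blast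
        show "aff_dim Q < int n"
        proof (cases "P = {w}")
          case True then show ?thesis using P(2) wA by simp
        next
          case False
          have "aff_dim P < int (Suc n)" using dim P(1) GF0 F0F by blast
          then show ?thesis using dimPA[OF P(1) False] P(2) by simp
        qed
      qed
      show "\<forall>v r. wdat F' c' v r = 0"
      proof (intro allI)
        fix v r
        define vs where "vs = v + ((r - v \<bullet> w) / \<delta>) *\<^sub>R v0"
        have "wdat F' c' v r = (\<Sum>P\<in>G. wsd (P \<inter> A) * c' (P \<inter> A) * (if P \<inter> A \<subseteq> {y. v \<bullet> y < r} then 1 else 0))"
          unfolding wdat_def F'_def by (simp add: sum.reindex[OF inj])
        also have "\<dots> = - (\<Sum>P\<in>G. wsd P * c P * (if w \<in> P \<and> (\<forall>u\<in>ext P - {w}. vs \<bullet> u < vs \<bullet> w) then 1 else 0))"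
          unfolding sum_negf[symmetric]
        proof (rule sum.cong[OF refl])
          fix P assume P: "P \<in> G"
          show "wsd (P \<inter> A) * c' (P \<inter> A) * (if P \<inter> A \<subseteq> {y. v \<bullet> y < r} then 1 else 0) =
               - (wsd P * c P * (if w \<in> P \<and> (\<forall>u\<in>ext P - {w}. vs \<bullet> u < vs \<bullet> w) then 1 else 0))"
            using sdPA[OF P] c'PA[OF P] incl[OF P, of v r] wG[OF P] unfolding vs_def by simp
        qed
        also have "(\<Sum>P\<in>G. wsd P * c P * (if w \<in> P \<and> (\<forall>u\<in>ext P - {w}. vs \<bullet> u < vs \<bullet> w) then 1 else 0))
           = (\<Sum>P\<in>F. wsd P * c P * (if w \<in> P \<and> (\<forall>u\<in>ext P - {w}. vs \<bullet> u < vs \<bullet> w) then 1 else 0))"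
        proof (rule sum.mono_neutral_cong_left[OF fin])
          show "G \<subseteq> F" using GF0 F0F by blast
          show "\<forall>i\<in>F - G. wsd i * c i * (if w \<in> i \<and> (\<forall>u\<in>ext i - {w}. vs \<bullet> u < vs \<bullet> w) then 1 else 0) = 0"
            unfolding G_def F0_def by auto
        qed simp
        also have "\<dots> = 0" by (rule STAR)
        finally show "wdat F' c' v r = 0" by simp
      qed
    qed
    moreover obtain P where P: "P \<in> G"
    proof -
      obtain P where "P \<in> F0" "w \<in> ext P" using wV unfolding V_def by blast
      then have "P \<in> G" unfolding G_def using ext_props(3)[OF polyF0] by blast
      then show ?thesis using that by blast
    qed
    ultimately have "c P = 0" using c'PA[OF P] unfolding F'_def by auto
    moreover have "c P \<noteq> 0" using P GF0 F0_def by blast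
    ultimately show False by simp
  qed
  then show ?thesis using wdat_trivial[OF fin dat] unfolding F0_def by blast
qed

lemma coreA_n:
  fixes F :: "'a::euclidean_space set set" and c :: "'a set \<Rightarrow> int"
  assumes "finite F" "\<forall>P\<in>F. polytope P" "\<forall>P\<in>F. \<forall>Q\<in>F. P \<noteq> Q \<longrightarrow> rel_interior P \<inter> rel_interior Q = {}"
    "\<forall>v r. wdat F c v r = 0" "\<forall>P\<in>F. aff_dim P < int n"
  shows "\<forall>P\<in>F. c P = 0"
  using assms
proof (induction n arbitrary: F c)
  case 0
  have "\<forall>P\<in>F. P = {}"
  proof
    fix P assume "P \<in> F"
    then have "aff_dim P < 0" using 0(5) by simp
    then have "aff_dim P = -1" using aff_dim_geq[of P] by linarith
    then show "P = {}" using aff_dim_empty[of P] by simp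
  qed
  then show ?case using wdat_trivial[OF 0(1) 0(4)] by blast
next
  case (Suc n)
  show ?case by (rule coreA_step[OF Suc.IH Suc.prems])
qed

lemma coreA:
  fixes F :: "'a::euclidean_space set set" and c :: "'a set \<Rightarrow> int"
  assumes "finite F" "\<forall>P\<in>F. polytope P" "\<forall>P\<in>F. \<forall>Q\<in>F. P \<noteq> Q \<longrightarrow> rel_interior P \<inter> rel_interior Q = {}"
    "\<forall>v r. wdat F c v r = 0"
  shows "\<forall>P\<in>F. c P = 0"
proof (rule coreA_n[OF assms, of "Suc DIM('a)"])
  have "\<forall>P\<in>F. aff_dim P \<le> int DIM('a)" using aff_dim_le_DIM by blast
  then show "\<forall>P\<in>F. aff_dim P < int (Suc DIM('a))" by force
qed

lemma ie3:
  fixes K :: "'a::euclidean_space set"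
  assumes "convex K"
  shows "(if K \<subseteq> {y. v \<bullet> y < r} then 1 else 0::int) =
    (if K \<inter> {y. a \<bullet> y \<le> b} \<subseteq> {y. v \<bullet> y < r} then 1 else 0) +
    (if K \<inter> {y. a \<bullet> y \<ge> b} \<subseteq> {y. v \<bullet> y < r} then 1 else 0) -
    (if K \<inter> {y. a \<bullet> y = b} \<subseteq> {y. v \<bullet> y < r} then 1 else 0)"
proof -
  let ?H = "{y. v \<bullet> y < r}"
  have split: "K = (K \<inter> {y. a \<bullet> y \<le> b}) \<union> (K \<inter> {y. a \<bullet> y \<ge> b})" by auto
  have mid: "\<not> K \<inter> {y. a \<bullet> y = b} \<subseteq> ?H"
    if n1: "\<not> K \<inter> {y. a \<bullet> y \<le> b} \<subseteq> ?H" and n2: "\<not> K \<inter> {y. a \<bullet> y \<ge> b} \<subseteq> ?H"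
  proof -
    obtain p where "p \<in> K \<inter> {y. a \<bullet> y \<le> b}" "p \<notin> ?H" using n1 by blast
    then have p: "p \<in> K" "a \<bullet> p \<le> b" "v \<bullet> p \<ge> r" by auto
    obtain q where "q \<in> K \<inter> {y. a \<bullet> y \<ge> b}" "q \<notin> ?H" using n2 by blast
    then have q: "q \<in> K" "a \<bullet> q \<ge> b" "v \<bullet> q \<ge> r" by auto
    show ?thesis
    proof (cases "a \<bullet> p = b \<or> a \<bullet> q = b")
      case True then show ?thesis using p q by auto
    next
      case False
      then have pq: "a \<bullet> p < b" "b < a \<bullet> q" using p q by auto
      define t where "t = (b - a \<bullet> p) / (a \<bullet> q - a \<bullet> p)"
      have t: "0 \<le> t" "t \<le> 1" using pq by (auto simp: t_def divide_simps)
      have tt: "t * (a \<bullet> q - a \<bullet> p) = b - a \<bullet> p" using pq by (simp add: t_def)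
      define m where "m = (1 - t) *\<^sub>R p + t *\<^sub>R q"
      have mK: "m \<in> K" unfolding m_def using convexD[OF assms p(1) q(1), of "1 - t" t] t by simp
      have "a \<bullet> m = a \<bullet> p + t * (a \<bullet> q - a \<bullet> p)" unfolding m_def by (simp add: inner_simps algebra_simps)
      then have ma: "a \<bullet> m = b" using tt by simp
      have "v \<bullet> m = (1 - t) * (v \<bullet> p) + t * (v \<bullet> q)" unfolding m_def by (simp add: inner_simps)
      also have "\<dots> \<ge> (1 - t) * r + t * r"
        using p(3) q(3) t by (intro add_mono mult_left_mono) auto
      finally have "v \<bullet> m \<ge> r" by (simp add: algebra_simps)
      then show ?thesis using mK ma by auto
    qed
  qed
  show ?thesis
  proof (cases "K \<inter> {y. a \<bullet> y \<le> b} \<subseteq> ?H"; cases "K \<inter> {y. a \<bullet> y \<ge> b} \<subseteq> ?H")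
    assume 1: "K \<inter> {y. a \<bullet> y \<le> b} \<subseteq> ?H" and 2: "K \<inter> {y. a \<bullet> y \<ge> b} \<subseteq> ?H"
    then have "K \<subseteq> ?H" using split by blast
    moreover have "K \<inter> {y. a \<bullet> y = b} \<subseteq> ?H" using 1 by auto
    ultimately show ?thesis using 1 2 by simp
  next
    assume 1: "K \<inter> {y. a \<bullet> y \<le> b} \<subseteq> ?H" and 2: "\<not> K \<inter> {y. a \<bullet> y \<ge> b} \<subseteq> ?H"
    then have "\<not> K \<subseteq> ?H" by blast
    moreover have "K \<inter> {y. a \<bullet> y = b} \<subseteq> ?H" using 1 by auto
    ultimately show ?thesis using 1 2 by simp
  next
    assume 1: "\<not> K \<inter> {y. a \<bullet> y \<le> b} \<subseteq> ?H" and 2: "K \<inter> {y. a \<bullet> y \<ge> b} \<subseteq> ?H"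
    then have "\<not> K \<subseteq> ?H" by blast
    moreover have "K \<inter> {y. a \<bullet> y = b} \<subseteq> ?H" using 2 by auto
    ultimately show ?thesis using 1 2 by simp
  next
    assume 1: "\<not> K \<inter> {y. a \<bullet> y \<le> b} \<subseteq> ?H" and 2: "\<not> K \<inter> {y. a \<bullet> y \<ge> b} \<subseteq> ?H"
    then have "\<not> K \<subseteq> ?H" by blast
    moreover have "\<not> K \<inter> {y. a \<bullet> y = b} \<subseteq> ?H" using mid[OF 1 2] .
    ultimately show ?thesis using 1 2 by simp
  qed
qed

definition sreg :: "('a::euclidean_space \<times> real) \<Rightarrow> 'a \<Rightarrow> 'a set" where
  "sreg h x = {y. sgn (fst h \<bullet> y - snd h) = sgn (fst h \<bullet> x - snd h)}"

definition refine :: "('a::euclidean_space \<times> real) \<Rightarrow> 'a set \<Rightarrow> 'a set set" where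
  "refine h C = (\<lambda>x. C \<inter> sreg h x) ` C"

lemma wsd_closure [simp]: "wsd (closure C) = wsd C"
  by (simp add: wsd_def)

lemma cut3:
  fixes C :: "'a::euclidean_space set"
  assumes cv: "convex C" and ro: "rel_interior C = C" and ne: "C \<noteq> {}" and pc: "polytope (closure C)"
  shows "finite (refine h C)"
    and "\<forall>D\<in>refine h C. convex D \<and> rel_interior D = D \<and> D \<noteq> {} \<and> polytope (closure D) \<and> D \<subseteq> C"
    and "(\<Sum>D\<in>refine h C. wsd D * (if closure D \<subseteq> {y. v \<bullet> y < r} then 1 else 0)) =
         wsd C * (if closure C \<subseteq> {y. v \<bullet> y < r} then 1 else 0)"
proof -
  obtain a b where h: "h = (a, b)" by (cases h)
  have sr: "sreg h x = {y. sgn (a \<bullet> y - b) = sgn (a \<bullet> x - b)}" for x unfolding sreg_def h by simp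
  have "(\<exists>s. \<forall>x\<in>C. sgn (a \<bullet> x - b) = s) \<or> \<not> (\<exists>s. \<forall>x\<in>C. sgn (a \<bullet> x - b) = s)" by blast
  then have "finite (refine h C) \<and>
    (\<forall>D\<in>refine h C. convex D \<and> rel_interior D = D \<and> D \<noteq> {} \<and> polytope (closure D) \<and> D \<subseteq> C) \<and>
    (\<Sum>D\<in>refine h C. wsd D * (if closure D \<subseteq> {y. v \<bullet> y < r} then 1 else 0)) =
         wsd C * (if closure C \<subseteq> {y. v \<bullet> y < r} then 1 else 0)"
  proof
    assume "\<exists>s. \<forall>x\<in>C. sgn (a \<bullet> x - b) = s"
    then obtain s where s: "\<forall>x\<in>C. sgn (a \<bullet> x - b) = s" by blast
    have "refine h C = {C}"
    proof -
      have "C \<inter> sreg h x = C" if "x \<in> C" for x using s that unfolding sr by auto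
      then show ?thesis unfolding refine_def using ne by auto
    qed
    then show ?thesis using cv ro ne pc by simp
  next
    assume nc: "\<not> (\<exists>s. \<forall>x\<in>C. sgn (a \<bullet> x - b) = s)"
    show ?thesis
    proof -
      have ane: "a \<noteq> 0"
      proof
        assume "a = 0" then show False using nc by auto
      qed
      have exq: "\<exists>q\<in>C. a \<bullet> q > b"
      proof (rule ccontr)
        assume "\<not> ?thesis"
        then have le: "\<forall>x\<in>C. a \<bullet> x \<le> b" by (auto simp: not_less)
        show False
        proof (cases "\<exists>m\<in>C. a \<bullet> m = b")
          case True
          then obtain m where "m \<in> C" "a \<bullet> m = b" by blast
          then have "\<forall>x\<in>C. a \<bullet> x = b" using ro_face[OF ro le] by blast
          then have "\<forall>x\<in>C. sgn (a \<bullet> x - b) = 0" by simp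
          then show False using nc by blast
        next
          case False
          then have "\<forall>x\<in>C. a \<bullet> x < b" using le by (auto simp: less_le)
          then have "\<forall>x\<in>C. sgn (a \<bullet> x - b) = -1" by (force simp: sgn_real_def)
          then show False using nc by blast
        qed
      qed
      have exp: "\<exists>p\<in>C. a \<bullet> p < b"
      proof (rule ccontr)
        assume "\<not> ?thesis"
        then have le: "\<forall>x\<in>C. (-a) \<bullet> x \<le> -b" by (auto simp: not_less)
        show False
        proof (cases "\<exists>m\<in>C. a \<bullet> m = b")
          case True
          then obtain m where "m \<in> C" "(-a) \<bullet> m = -b" by auto
          then have "\<forall>x\<in>C. (-a) \<bullet> x = -b" using ro_face[OF ro le] by blast
          then have "\<forall>x\<in>C. sgn (a \<bullet> x - b) = 0" by simp
          then show False using nc by blast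
        next
          case False
          then have "\<forall>x\<in>C. a \<bullet> x > b" using le by (auto simp: less_le)
          then have "\<forall>x\<in>C. sgn (a \<bullet> x - b) = 1" by (force simp: sgn_real_def)
          then show False using nc by blast
        qed
      qed
      obtain p where p: "p \<in> C" "a \<bullet> p < b" using exp by blast
      obtain q where q: "q \<in> C" "a \<bullet> q > b" using exq by blast
      have mhyp: "rel_interior C \<inter> {y. a \<bullet> y = b} \<noteq> {}"
        using relint_meets_hyp[OF cv, of p q a b] closure_subset[of C] p q by blast
      then obtain m where m: "m \<in> C" "a \<bullet> m = b" using ro by auto
      define X1 where "X1 = C \<inter> {y. a \<bullet> y < b}"
      define X2 where "X2 = C \<inter> {y. a \<bullet> y = b}"
      define X3 where "X3 = C \<inter> {y. a \<bullet> y > b}"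
      have s1: "x \<in> C \<Longrightarrow> a \<bullet> x < b \<Longrightarrow> C \<inter> sreg h x = X1" for x
        unfolding sr X1_def by (auto simp: sgn_real_def split: if_splits)
      have s2: "x \<in> C \<Longrightarrow> a \<bullet> x = b \<Longrightarrow> C \<inter> sreg h x = X2" for x
        unfolding sr X2_def by (auto simp: sgn_real_def split: if_splits)
      have s3: "x \<in> C \<Longrightarrow> a \<bullet> x > b \<Longrightarrow> C \<inter> sreg h x = X3" for x
        unfolding sr X3_def by (auto simp: sgn_real_def split: if_splits)
      have refeq: "refine h C = {X1, X2, X3}"
      proof
        show "refine h C \<subseteq> {X1, X2, X3}"
        proof
          fix D assume "D \<in> refine h C"
          then obtain x where x: "x \<in> C" "D = C \<inter> sreg h x" unfolding refine_def by blast
          consider "a \<bullet> x < b" | "a \<bullet> x = b" | "a \<bullet> x > b" by linarith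
          then show "D \<in> {X1, X2, X3}" using s1 s2 s3 x by cases auto
        qed
        show "{X1, X2, X3} \<subseteq> refine h C"
          unfolding refine_def using s1[OF p] s2[OF m] s3[OF q] p(1) m(1) q(1) by blast
      qed
      have mem: "p \<in> X1" "p \<notin> X2" "p \<notin> X3" "m \<in> X2" "m \<notin> X3"
        using p m unfolding X1_def X2_def X3_def by auto
      have d12: "X1 \<noteq> X2" using mem by blast
      have d13: "X1 \<noteq> X3" using mem by blast
      have d23: "X2 \<noteq> X3" using mem by blast
      have rT1: "rel_interior {y. a \<bullet> y < b} = {y. a \<bullet> y < b}" by (rule rel_interior_open[OF open_halfspace_lt])
      have rT3: "rel_interior {y. a \<bullet> y > b} = {y. a \<bullet> y > b}" by (rule rel_interior_open[OF open_halfspace_gt])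
      have n1: "rel_interior C \<inter> rel_interior {y. a \<bullet> y < b} \<noteq> {}" using p ro rT1 by auto
      have n3: "rel_interior C \<inter> rel_interior {y. a \<bullet> y > b} \<noteq> {}" using q ro rT3 by auto
      have "rel_interior X1 = rel_interior C \<inter> rel_interior {y. a \<bullet> y < b}"
        unfolding X1_def by (rule convex_rel_interior_inter_two[OF cv convex_halfspace_lt n1])
      then have ri1: "rel_interior X1 = X1" using ro rT1 X1_def by simp
      have "rel_interior X3 = rel_interior C \<inter> rel_interior {y. a \<bullet> y > b}"
        unfolding X3_def by (rule convex_rel_interior_inter_two[OF cv convex_halfspace_gt n3])
      then have ri3: "rel_interior X3 = X3" using ro rT3 X3_def by simp
      have ri2: "rel_interior X2 = X2" unfolding X2_def
        using convex_affine_rel_interior_Int[OF cv affine_hyperplane mhyp] ro by simp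
      have "closure X1 = closure C \<inter> closure {y. a \<bullet> y < b}"
        unfolding X1_def by (rule closure_Int_convex[OF cv convex_halfspace_lt n1])
      then have cl1: "closure X1 = closure C \<inter> {y. a \<bullet> y \<le> b}" using closure_halfspace_lt[OF ane] by simp
      have "closure X3 = closure C \<inter> closure {y. a \<bullet> y > b}"
        unfolding X3_def by (rule closure_Int_convex[OF cv convex_halfspace_gt n3])
      then have cl3: "closure X3 = closure C \<inter> {y. a \<bullet> y \<ge> b}" using closure_halfspace_gt[OF ane] by simp
      have cl2: "closure X2 = closure C \<inter> {y. a \<bullet> y = b}" unfolding X2_def
        using convex_affine_closure_Int[OF cv affine_hyperplane mhyp] .
      have ad1: "aff_dim X1 = aff_dim C" unfolding X1_def
        using aff_dim_convex_Int_open[OF cv open_halfspace_lt] p by blast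
      have ad3: "aff_dim X3 = aff_dim C" unfolding X3_def
        using aff_dim_convex_Int_open[OF cv open_halfspace_gt] q by blast
      have "\<not> C \<subseteq> {y. a \<bullet> y = b}" using p by auto
      then have ad2: "aff_dim X2 = aff_dim C - 1" unfolding X2_def using aff_dim_hyp[OF cv mhyp] by blast
      have "aff_dim C \<ge> 0" using ne aff_dim_empty[of C] aff_dim_geq[of C] by linarith
      then have "nat (aff_dim C + 1) = Suc (nat (aff_dim C))" by simp
      then have w2: "wsd X2 = - wsd C" using ad2 by (simp add: wsd_def)
      have w1: "wsd X1 = wsd C" "wsd X3 = wsd C" using ad1 ad3 by (simp_all add: wsd_def)
      have fin: "finite (refine h C)" using refeq by simp
      have inv: "\<forall>D\<in>refine h C. convex D \<and> rel_interior D = D \<and> D \<noteq> {} \<and> polytope (closure D) \<and> D \<subseteq> C"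
      proof -
        have "convex X1" "convex X2" "convex X3" unfolding X1_def X2_def X3_def
          using cv by (auto intro!: convex_Int convex_halfspace_lt convex_halfspace_gt convex_hyperplane)
        moreover have "X1 \<noteq> {}" "X2 \<noteq> {}" "X3 \<noteq> {}" unfolding X1_def X2_def X3_def using p m q by auto
        moreover have "polytope (closure X1)" "polytope (closure X2)" "polytope (closure X3)"
          unfolding cl1 cl2 cl3
          by (auto intro!: polytope_Int_polyhedron pc polyhedron_halfspace_le polyhedron_halfspace_ge polyhedron_hyperplane)
        moreover have "X1 \<subseteq> C" "X2 \<subseteq> C" "X3 \<subseteq> C" unfolding X1_def X2_def X3_def by auto
        ultimately show ?thesis unfolding refeq using ri1 ri2 ri3 by blast
      qed
      have "(\<Sum>D\<in>refine h C. wsd D * (if closure D \<subseteq> {y. v \<bullet> y < r} then 1 else 0)) =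
          wsd C * ((if closure C \<inter> {y. a \<bullet> y \<le> b} \<subseteq> {y. v \<bullet> y < r} then 1 else 0) +
                   (if closure C \<inter> {y. a \<bullet> y \<ge> b} \<subseteq> {y. v \<bullet> y < r} then 1 else 0) -
                   (if closure C \<inter> {y. a \<bullet> y = b} \<subseteq> {y. v \<bullet> y < r} then 1 else 0))"
        unfolding refeq using d12 d13 d23 by (simp add: cl1 cl2 cl3 w1 w2 algebra_simps)
      also have "\<dots> = wsd C * (if closure C \<subseteq> {y. v \<bullet> y < r} then 1 else 0)"
        using ie3[OF convex_closure[OF cv], of v r a b] by simp
      finally show ?thesis using fin inv by blast
    qed
  qed
  then show "finite (refine h C)"
    and "\<forall>D\<in>refine h C. convex D \<and> rel_interior D = D \<and> D \<noteq> {} \<and> polytope (closure D) \<and> D \<subseteq> C"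
    and "(\<Sum>D\<in>refine h C. wsd D * (if closure D \<subseteq> {y. v \<bullet> y < r} then 1 else 0)) =
         wsd C * (if closure C \<subseteq> {y. v \<bullet> y < r} then 1 else 0)" by blast+
qed

definition cell :: "('a::euclidean_space \<times> real) list \<Rightarrow> 'a \<Rightarrow> 'a set" where
  "cell hs x = {y. \<forall>h\<in>set hs. sgn (fst h \<bullet> y - snd h) = sgn (fst h \<bullet> x - snd h)}"

definition cellsP :: "'a::euclidean_space set \<Rightarrow> ('a \<times> real) list \<Rightarrow> 'a set set" where
  "cellsP P hs = (\<lambda>x. rel_interior P \<inter> cell hs x) ` rel_interior P"

lemma cell_self: "x \<in> cell hs x" unfolding cell_def by simp

lemma cell_eq: "y \<in> cell hs x \<Longrightarrow> cell hs y = cell hs x" unfolding cell_def by auto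

lemma cell_Cons: "cell (h # hs) x = sreg h x \<inter> cell hs x" unfolding cell_def sreg_def by auto

lemma cellsP_disj:
  assumes "C1 \<in> cellsP P hs" "C2 \<in> cellsP P hs" "C1 \<noteq> C2"
  shows "C1 \<inter> C2 = {}"
proof (rule ccontr)
  assume "C1 \<inter> C2 \<noteq> {}"
  then obtain y where y: "y \<in> C1" "y \<in> C2" by blast
  obtain x1 where x1: "C1 = rel_interior P \<inter> cell hs x1" using assms(1) unfolding cellsP_def by blast
  obtain x2 where x2: "C2 = rel_interior P \<inter> cell hs x2" using assms(2) unfolding cellsP_def by blast
  have "cell hs x1 = cell hs y" using cell_eq y x1 by auto
  moreover have "cell hs x2 = cell hs y" using cell_eq y x2 by auto
  ultimately show False using assms(3) x1 x2 by simp
qed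

lemma cellsP_Cons: "cellsP P (h # hs) = \<Union>(refine h ` cellsP P hs)"
proof
  show "cellsP P (h # hs) \<subseteq> \<Union>(refine h ` cellsP P hs)"
  proof
    fix D assume "D \<in> cellsP P (h # hs)"
    then obtain x where x: "x \<in> rel_interior P" "D = rel_interior P \<inter> cell (h # hs) x"
      unfolding cellsP_def by blast
    define C where "C = rel_interior P \<inter> cell hs x"
    have C: "C \<in> cellsP P hs" unfolding C_def cellsP_def using x(1) by blast
    have "x \<in> C" unfolding C_def using x(1) cell_self by blast
    moreover have "D = C \<inter> sreg h x" unfolding C_def x(2) cell_Cons by blast
    ultimately have "D \<in> refine h C" unfolding refine_def by blast
    then show "D \<in> \<Union>(refine h ` cellsP P hs)" using C by blast
  qed
next
  show "\<Union>(refine h ` cellsP P hs) \<subseteq> cellsP P (h # hs)"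
  proof
    fix D assume "D \<in> \<Union>(refine h ` cellsP P hs)"
    then obtain C where C: "C \<in> cellsP P hs" and D: "D \<in> refine h C" by blast
    obtain x0 where x0: "x0 \<in> rel_interior P" "C = rel_interior P \<inter> cell hs x0"
      using C unfolding cellsP_def by blast
    obtain x where x: "x \<in> C" "D = C \<inter> sreg h x" using D unfolding refine_def by blast
    have ce: "cell hs x = cell hs x0" using cell_eq x(1) x0(2) by blast
    have "D = rel_interior P \<inter> cell (h # hs) x" unfolding x(2) x0(2) cell_Cons ce by blast
    moreover have "x \<in> rel_interior P" using x(1) x0(2) by blast
    ultimately show "D \<in> cellsP P (h # hs)" unfolding cellsP_def by blast
  qed
qed

lemma valuation:
  fixes P :: "'a::euclidean_space set"
  assumes "polytope P" "P \<noteq> {}"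
  shows "finite (cellsP P hs) \<and>
    (\<forall>C\<in>cellsP P hs. convex C \<and> rel_interior C = C \<and> C \<noteq> {} \<and> polytope (closure C) \<and> C \<subseteq> rel_interior P) \<and>
    (\<Sum>C\<in>cellsP P hs. wsd C * (if closure C \<subseteq> {y. v \<bullet> y < r} then 1 else 0)) =
      wsd P * (if P \<subseteq> {y. v \<bullet> y < r} then 1 else 0)"
proof (induction hs)
  case Nil
  have cv: "convex P" using assms(1) polytope_imp_convex by blast
  have cl: "closure P = P" using assms(1) polytope_imp_closed closure_closed by blast
  have ne: "rel_interior P \<noteq> {}" using assms(2) rel_interior_eq_empty[OF cv] by simp
  have c0: "cellsP P [] = {rel_interior P}" unfolding cellsP_def cell_def using ne by auto
  have w0: "wsd (rel_interior P) = wsd P" unfolding wsd_def using rel_interior_aff_dim[OF cv] by simp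
  have cl0: "closure (rel_interior P) = P" using convex_closure_rel_interior[OF cv] cl by simp
  have i0: "convex (rel_interior P) \<and> rel_interior (rel_interior P) = rel_interior P \<and> rel_interior P \<noteq> {} \<and>
     polytope (closure (rel_interior P)) \<and> rel_interior P \<subseteq> rel_interior P"
    using convex_rel_interior[OF cv] rel_interior_rel_interior[OF cv] ne assms(1) cl0 by simp
  have s0: "(\<Sum>C\<in>{rel_interior P}. wsd C * (if closure C \<subseteq> {y. v \<bullet> y < r} then 1 else 0)) =
      wsd P * (if P \<subseteq> {y. v \<bullet> y < r} then 1 else 0)" using w0 cl0 by simp
  show ?case unfolding c0 using i0 s0 by blast
next
  case (Cons h hs)
  have fin: "finite (cellsP P hs)"
    and inv: "\<forall>C\<in>cellsP P hs. convex C \<and> rel_interior C = C \<and> C \<noteq> {} \<and> polytope (closure C) \<and> C \<subseteq> rel_interior P"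
    and sm: "(\<Sum>C\<in>cellsP P hs. wsd C * (if closure C \<subseteq> {y. v \<bullet> y < r} then 1 else 0)) =
      wsd P * (if P \<subseteq> {y. v \<bullet> y < r} then 1 else 0)" using Cons.IH by blast+
  have finR: "\<forall>C\<in>cellsP P hs. finite (refine h C)" using cut3(1) inv by blast
  have invR: "\<forall>C\<in>cellsP P hs. \<forall>D\<in>refine h C. convex D \<and> rel_interior D = D \<and> D \<noteq> {} \<and> polytope (closure D) \<and> D \<subseteq> C"
    using cut3(2) inv by blast
  have disjR: "\<forall>C1\<in>cellsP P hs. \<forall>C2\<in>cellsP P hs. C1 \<noteq> C2 \<longrightarrow> refine h C1 \<inter> refine h C2 = {}"
  proof (intro ballI impI)
    fix C1 C2 assume c: "C1 \<in> cellsP P hs" "C2 \<in> cellsP P hs" "C1 \<noteq> C2"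
    show "refine h C1 \<inter> refine h C2 = {}"
    proof (rule ccontr)
      assume "refine h C1 \<inter> refine h C2 \<noteq> {}"
      then obtain D where D: "D \<in> refine h C1" "D \<in> refine h C2" by blast
      then have "D \<subseteq> C1" "D \<subseteq> C2" "D \<noteq> {}" using invR c by blast+
      then show False using cellsP_disj[OF c] by blast
    qed
  qed
  have "finite (cellsP P (h # hs))" unfolding cellsP_Cons using fin finR by (intro finite_UN_I) auto
  moreover have "\<forall>D\<in>cellsP P (h # hs). convex D \<and> rel_interior D = D \<and> D \<noteq> {} \<and> polytope (closure D) \<and> D \<subseteq> rel_interior P"
  proof
    fix D assume "D \<in> cellsP P (h # hs)"
    then obtain C where C: "C \<in> cellsP P hs" and D: "D \<in> refine h C" unfolding cellsP_Cons by blast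
    have "convex D \<and> rel_interior D = D \<and> D \<noteq> {} \<and> polytope (closure D) \<and> D \<subseteq> C" using invR C D by blast
    moreover have "C \<subseteq> rel_interior P" using inv C by blast
    ultimately show "convex D \<and> rel_interior D = D \<and> D \<noteq> {} \<and> polytope (closure D) \<and> D \<subseteq> rel_interior P" by blast
  qed
  moreover have "(\<Sum>D\<in>cellsP P (h # hs). wsd D * (if closure D \<subseteq> {y. v \<bullet> y < r} then 1 else 0)) =
      wsd P * (if P \<subseteq> {y. v \<bullet> y < r} then 1 else 0)"
  proof -
    have "(\<Sum>D\<in>cellsP P (h # hs). wsd D * (if closure D \<subseteq> {y. v \<bullet> y < r} then 1 else 0)) =
        (\<Sum>C\<in>cellsP P hs. \<Sum>D\<in>refine h C. wsd D * (if closure D \<subseteq> {y. v \<bullet> y < r} then 1 else 0))"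
      unfolding cellsP_Cons by (rule sum.UNION_disjoint[OF fin finR disjR])
    also have "\<dots> = (\<Sum>C\<in>cellsP P hs. wsd C * (if closure C \<subseteq> {y. v \<bullet> y < r} then 1 else 0))"
    proof (rule sum.cong[OF refl])
      fix C assume C: "C \<in> cellsP P hs"
      then have "convex C" "rel_interior C = C" "C \<noteq> {}" "polytope (closure C)" using inv by blast+
      then show "(\<Sum>D\<in>refine h C. wsd D * (if closure D \<subseteq> {y. v \<bullet> y < r} then 1 else 0)) =
          wsd C * (if closure C \<subseteq> {y. v \<bullet> y < r} then 1 else 0)" by (rule cut3(3))
    qed
    finally show ?thesis using sm by simp
  qed
  ultimately show ?case by blast
qed

lemma cell_mono: "set hs' \<subseteq> set hs \<Longrightarrow> cell hs x \<subseteq> cell hs' x"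
  unfolding cell_def by blast

lemma hs_exists:
  fixes P :: "'a::euclidean_space set"
  assumes "polytope P"
  shows "\<exists>hs. \<forall>x\<in>rel_interior P. cell hs x \<subseteq> rel_interior P"
proof -
  have pP: "polyhedron P" by (rule polytope_imp_polyhedron[OF assms])
  from polyhedron_Int_affine_minimal[THEN iffD1, OF pP] obtain F where F0:
    "finite F \<and> P = affine hull P \<inter> \<Inter>F \<and> (\<forall>h\<in>F. \<exists>a b. a \<noteq> 0 \<and> h = {x. a \<bullet> x \<le> b}) \<and>
     (\<forall>F'. F' \<subset> F \<longrightarrow> P \<subset> affine hull P \<inter> \<Inter>F')" ..
  have F1: "finite F" using F0 by (rule conjunct1)
  have F2: "P = affine hull P \<inter> \<Inter>F" using F0 by (elim conjE)
  have F3: "\<forall>h\<in>F. \<exists>a b. a \<noteq> 0 \<and> h = {x. a \<bullet> x \<le> b}" using F0 by (elim conjE)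
  have F4: "\<forall>F'. F' \<subset> F \<longrightarrow> P \<subset> affine hull P \<inter> \<Inter>F'" using F0 by (elim conjE)
  have "\<forall>h\<in>F. \<exists>ab. fst ab \<noteq> 0 \<and> h = {x. fst ab \<bullet> x \<le> snd ab}"
  proof
    fix h assume "h \<in> F"
    then obtain a b where "a \<noteq> 0" "h = {x. a \<bullet> x \<le> b}" using F3 by blast
    then show "\<exists>ab. fst ab \<noteq> 0 \<and> h = {x. fst ab \<bullet> x \<le> snd ab}" by (intro exI[of _ "(a, b)"]) simp
  qed
  from bchoice[OF this] obtain f where f: "\<forall>h\<in>F. fst (f h) \<noteq> 0 \<and> h = {x. fst (f h) \<bullet> x \<le> snd (f h)}" ..
  have ri: "rel_interior P = {x \<in> P. \<forall>h\<in>F. fst (f h) \<bullet> x < snd (f h)}"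
  proof (rule rel_interior_polyhedron_explicit[OF F1 F2])
    fix h assume "h \<in> F" with f show "fst (f h) \<noteq> 0 \<and> h = {x. fst (f h) \<bullet> x \<le> snd (f h)}" by (rule bspec)
  next
    fix F' assume "F' \<subset> F" then show "P \<subset> affine hull P \<inter> \<Inter>F'" by (rule F4[rule_format])
  qed
  obtain FF where FF1: "finite FF" and "of_nat (card FF) + aff_dim P = DIM('a)" and FF2: "affine hull P = \<Inter>FF"
    and FF3: "\<And>h. h \<in> FF \<Longrightarrow> \<exists>a b. a \<noteq> 0 \<and> h = {x. a \<bullet> x = b}"
    by (rule affine_hull_finite_intersection_hyperplanes[of P], rule that, assumption+)
  have "\<forall>h\<in>FF. \<exists>ab. h = {x. fst ab \<bullet> x = snd ab}"
  proof
    fix h assume "h \<in> FF"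
    then obtain a b where "h = {x. a \<bullet> x = b}" using FF3 by meson
    then show "\<exists>ab. h = {x. fst ab \<bullet> x = snd ab}" by (intro exI[of _ "(a, b)"]) simp
  qed
  from bchoice[OF this] obtain g where g: "\<forall>h\<in>FF. h = {x. fst (g h) \<bullet> x = snd (g h)}" ..
  obtain hs where hs: "set hs = f ` F \<union> g ` FF" using finite_list[of "f ` F \<union> g ` FF"] F1 FF1 by blast
  show ?thesis
  proof (intro exI ballI subsetI)
    fix x y assume x: "x \<in> rel_interior P" and y: "y \<in> cell hs x"
    have xP: "x \<in> P" using x rel_interior_subset by blast
    have xA: "x \<in> affine hull P" using xP by (rule hull_inc)
    have yA: "y \<in> affine hull P"
      unfolding FF2
    proof
      fix H assume H: "H \<in> FF"
      have gH: "H = {x. fst (g H) \<bullet> x = snd (g H)}" using g H by (rule bspec)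
      have "x \<in> H" using xA H FF2 by blast
      then have "fst (g H) \<bullet> x = snd (g H)" by (subst (asm) gH) simp
      moreover have "sgn (fst (g H) \<bullet> y - snd (g H)) = sgn (fst (g H) \<bullet> x - snd (g H))"
        using y hs H unfolding cell_def by blast
      ultimately have "fst (g H) \<bullet> y = snd (g H)" by (simp add: sgn_eq_0_iff)
      then show "y \<in> H" by (subst gH) simp
    qed
    have yF: "\<forall>h\<in>F. fst (f h) \<bullet> y < snd (f h)"
    proof
      fix h assume h: "h \<in> F"
      have "fst (f h) \<bullet> x < snd (f h)" using x ri h by blast
      moreover have "sgn (fst (f h) \<bullet> y - snd (f h)) = sgn (fst (f h) \<bullet> x - snd (f h))"
        using y hs h unfolding cell_def by blast
      ultimately show "fst (f h) \<bullet> y < snd (f h)" by (simp add: sgn_real_def split: if_splits)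
    qed
    have "y \<in> \<Inter>F"
    proof
      fix h assume h: "h \<in> F"
      have fh: "h = {x. fst (f h) \<bullet> x \<le> snd (f h)}" using f h by blast
      have "fst (f h) \<bullet> y < snd (f h)" using yF h by (rule bspec)
      then show "y \<in> h" by (subst fh) simp
    qed
    then have "y \<in> P" using yA F2 by blast
    then show "y \<in> rel_interior P" using ri yF by blast
  qed
qed

lemma sc_simplex:
  assumes "simplicial_complex K" "S \<in> K"
  shows "finite S" "S \<noteq> {}" "\<not> affine_dependent S"
  using assms unfolding simplicial_complex_def is_simplex_def by auto

lemma sc_relint_unique:
  fixes K :: "'a::euclidean_space set set"
  assumes K: "simplicial_complex K" and S: "S \<in> K" and T: "T \<in> K"
    and xS: "x \<in> rel_interior (convex hull S)" and xT: "x \<in> rel_interior (convex hull T)"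
  shows "S = T"
proof -
  have half: "A \<subseteq> B" if A: "A \<in> K" and B: "B \<in> K" and xA: "x \<in> rel_interior (convex hull A)"
    and xB: "x \<in> rel_interior (convex hull B)" for A B
  proof -
    have ci: "convex hull A \<inter> convex hull B = convex hull (A \<inter> B)"
      using K A B unfolding simplicial_complex_def by blast
    have xI: "x \<in> convex hull (A \<inter> B)" using ci xA xB rel_interior_subset by blast
    have ia: "\<not> affine_dependent A" using sc_simplex[OF K A] by blast
    have "convex hull (A \<inter> B) face_of convex hull A"
      using face_of_convex_hull_affine_independent[OF ia] by blast
    then have eq: "convex hull (A \<inter> B) = convex hull A"
      using face_of_disjoint_rel_interior xI xA by blast
    have ib: "\<not> affine_dependent (A \<inter> B)" using affine_independent_subset[OF ia] by blast
    show "A \<subseteq> B"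
    proof
      fix z assume "z \<in> A"
      then have "z extreme_point_of convex hull A"
        using extreme_point_of_convex_hull_affine_independent[OF ia] by blast
      then have "z extreme_point_of convex hull (A \<inter> B)" using eq by simp
      then show "z \<in> B" using extreme_point_of_convex_hull_affine_independent[OF ib] by blast
    qed
  qed
  show ?thesis using half[OF S T xS xT] half[OF T S xT xS] by blast
qed

lemma sc_relint_exists:
  fixes K :: "'a::euclidean_space set set"
  assumes K: "simplicial_complex K" and S: "S \<in> K" and x: "x \<in> convex hull S"
  shows "\<exists>T\<in>K. x \<in> rel_interior (convex hull T)"
proof -
  have fS: "finite S" and iS: "\<not> affine_dependent S" using sc_simplex[OF K S] by auto
  obtain u where u: "\<forall>z\<in>S. 0 \<le> u z" "sum u S = 1" "(\<Sum>z\<in>S. u z *\<^sub>R z) = x"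
    using x convex_hull_finite[OF fS] by blast
  define T where "T = {z\<in>S. 0 < u z}"
  have TS: "T \<subseteq> S" unfolding T_def by blast
  have zero: "\<forall>z\<in>S - T. u z = 0" using u(1) unfolding T_def by force
  have sT: "sum u T = 1" using sum.mono_neutral_left[OF fS TS zero] u(2) by simp
  have xT: "(\<Sum>z\<in>T. u z *\<^sub>R z) = x" using sum.mono_neutral_left[OF fS TS, of "\<lambda>z. u z *\<^sub>R z"] zero u(3) by simp
  have Tne: "T \<noteq> {}" using sT by auto
  have TK: "T \<in> K" using K S TS Tne unfolding simplicial_complex_def by blast
  have iT: "\<not> affine_dependent T" using affine_independent_subset[OF iS TS] .
  have "x \<in> rel_interior (convex hull T)"
    unfolding rel_interior_convex_hull_explicit[OF iT] using sT xT T_def by blast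
  then show ?thesis using TK by blast
qed

lemma assoc_sum:
  fixes K :: "'a::euclidean_space set set"
  assumes K: "simplicial_complex K"
  shows "assoc_fun K g x = (\<Sum>S\<in>{S\<in>K. x \<in> rel_interior (convex hull S)}. g S)"
proof (cases "\<exists>S\<in>K. x \<in> rel_interior (convex hull S)")
  case True
  then obtain S where S: "S \<in> K" "x \<in> rel_interior (convex hull S)" by blast
  have uq: "T = S" if "T \<in> K" "x \<in> rel_interior (convex hull T)" for T
    using sc_relint_unique[OF K that(1) S(1) that(2) S(2)] .
  have set: "{T\<in>K. x \<in> rel_interior (convex hull T)} = {S}"
  proof (intro equalityI subsetI)
    fix T assume "T \<in> {T\<in>K. x \<in> rel_interior (convex hull T)}"
    then show "T \<in> {S}" using uq by blast
  next
    fix T assume "T \<in> {S}"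
    then show "T \<in> {T\<in>K. x \<in> rel_interior (convex hull T)}" using S by simp
  qed
  have th: "(THE T. T \<in> K \<and> x \<in> rel_interior (convex hull T)) = S"
  proof (rule the_equality)
    show "S \<in> K \<and> x \<in> rel_interior (convex hull S)" using S by simp
  next
    fix T assume "T \<in> K \<and> x \<in> rel_interior (convex hull T)"
    then show "T = S" using uq by blast
  qed
  have "assoc_fun K g x = g (THE T. T \<in> K \<and> x \<in> rel_interior (convex hull T))"
    unfolding assoc_fun_def using True by (rule if_P)
  then show ?thesis unfolding set th by simp
next
  case False
  then have e: "{S\<in>K. x \<in> rel_interior (convex hull S)} = {}" by blast
  have "assoc_fun K g x = 0" unfolding assoc_fun_def using False by (rule if_not_P)
  then show ?thesis unfolding e by simp
qed

lemma assoc_ne0: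
  fixes K :: "'a::euclidean_space set set"
  assumes K: "weighted_complex K g"
  shows "assoc_fun K g x \<noteq> 0 \<longleftrightarrow> x \<in> underlying_space K"
proof -
  have sc: "simplicial_complex K" using K unfolding weighted_complex_def by blast
  show ?thesis
  proof
    assume "assoc_fun K g x \<noteq> 0"
    then have "\<exists>S\<in>K. x \<in> rel_interior (convex hull S)" unfolding assoc_fun_def by metis
    then show "x \<in> underlying_space K" unfolding underlying_space_def using rel_interior_subset by blast
  next
    assume "x \<in> underlying_space K"
    then obtain S where "S \<in> K" "x \<in> convex hull S" unfolding underlying_space_def by blast
    then obtain T where T: "T \<in> K" "x \<in> rel_interior (convex hull T)" using sc_relint_exists[OF sc] by blast
    have uq: "T' = T" if "T' \<in> K" "x \<in> rel_interior (convex hull T')" for T'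
      using sc_relint_unique[OF sc that(1) T(1) that(2) T(2)] .
    then have "{S\<in>K. x \<in> rel_interior (convex hull S)} = {T}" using T by blast
    then have "assoc_fun K g x = g T" using assoc_sum[OF sc] by simp
    moreover have "g T \<ge> 1" using K T(1) unfolding weighted_complex_def by blast
    ultimately show "assoc_fun K g x \<noteq> 0" by simp
  qed
qed

definition Wc :: "'a::euclidean_space set set \<Rightarrow> ('a set \<Rightarrow> nat) \<Rightarrow> 'a \<Rightarrow> real \<Rightarrow> int" where
  "Wc K g v r = (\<Sum>S\<in>K. (-1) ^ (card S - 1) * int (g S) * (if \<forall>u\<in>S. v \<bullet> u \<le> r then 1 else 0))"

definition Dopen :: "'a::euclidean_space set set \<Rightarrow> ('a set \<Rightarrow> nat) \<Rightarrow> 'a \<Rightarrow> real \<Rightarrow> int" where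
  "Dopen K g v r = (\<Sum>S\<in>K. wsd (convex hull S) * int (g S) * (if convex hull S \<subseteq> {y. v \<bullet> y < r} then 1 else 0))"

lemma hull_sub_open: "convex hull S \<subseteq> {y. v \<bullet> y < r} \<longleftrightarrow> (\<forall>u\<in>S. v \<bullet> u < r)"
proof
  assume a: "convex hull S \<subseteq> {y. v \<bullet> y < r}"
  have "S \<subseteq> {y. v \<bullet> y < r}" using subset_trans[OF hull_subset[of S convex] a] .
  then show "\<forall>u\<in>S. v \<bullet> u < r" by blast
next
  assume "\<forall>u\<in>S. v \<bullet> u < r"
  then have "S \<subseteq> {y. v \<bullet> y < r}" by blast
  then show "convex hull S \<subseteq> {y. v \<bullet> y < r}" by (rule hull_minimal) (rule convex_halfspace_lt)
qed

lemma wsd_simplex: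
  fixes S :: "'a::euclidean_space set"
  assumes "finite S" "S \<noteq> {}" "\<not> affine_dependent S"
  shows "wsd (convex hull S) = - ((-1) ^ (card S - 1))"
proof -
  have "of_nat (card S) = aff_dim S + 1" using aff_dim_affine_independent[OF assms(3)] by simp
  then have n: "nat (aff_dim (convex hull S) + 1) = card S" by (simp add: aff_dim_convex_hull)
  have "card S > 0" using assms(1,2) by (simp add: card_gt_0_iff)
  then obtain k where k: "card S = Suc k" using gr0_implies_Suc by blast
  then have "((-1::int) ^ card S) = - ((-1) ^ (card S - 1))" by simp
  then show ?thesis unfolding wsd_def n by simp
qed

lemma WECT_Wc:
  fixes K :: "'a::euclidean_space set set"
  assumes K: "simplicial_complex K"
  shows "WECT K g v r = Wc K g v r"
proof -
  have fK: "finite K" using K unfolding simplicial_complex_def by blast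
  have h: "height v S \<le> r \<longleftrightarrow> (\<forall>u\<in>S. v \<bullet> u \<le> r)" if "S \<in> K" for S
  proof -
    have "finite S" "S \<noteq> {}" using sc_simplex[OF K that] by auto
    then show ?thesis unfolding height_def by (simp add: Max_le_iff)
  qed
  have "WECT K g v r = (\<Sum>S\<in>{S\<in>K. height v S \<le> r}. (-1) ^ simplex_dim S * int (g S))"
    unfolding WECT_def weighted_euler_char_def sublevel_def ..
  also have "\<dots> = (\<Sum>S\<in>K. if height v S \<le> r then (-1) ^ simplex_dim S * int (g S) else 0)"
    by (rule sum.inter_filter[OF fK])
  also have "\<dots> = Wc K g v r" unfolding Wc_def simplex_dim_def
    by (rule sum.cong[OF refl]) (simp add: h)
  finally show ?thesis .
qed

lemma Wc_scale:
  assumes "c > 0"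
  shows "Wc K g (c *\<^sub>R v) (c * r) = Wc K g v r"
  unfolding Wc_def using assms by (simp add: inner_simps)

lemma Wc_all:
  fixes K1 K2 :: "'a::euclidean_space set set"
  assumes w1: "weighted_complex K1 g1" and w2: "weighted_complex K2 g2"
    and hyp: "\<forall>v\<in>sphere 0 1. \<forall>r. WECT K1 g1 v r = WECT K2 g2 v r"
  shows "Wc K1 g1 v r = Wc K2 g2 v r"
proof -
  have sc1: "simplicial_complex K1" and sc2: "simplicial_complex K2"
    using w1 w2 unfolding weighted_complex_def by auto
  have unit: "Wc K1 g1 e t = Wc K2 g2 e t" if "norm e = 1" for e t
    using hyp that WECT_Wc[OF sc1] WECT_Wc[OF sc2] by simp
  show ?thesis
  proof (cases "v = 0")
    case False
    define e where "e = (1 / norm v) *\<^sub>R v"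
    have ne: "norm e = 1" using False unfolding e_def by simp
    have nv: "norm v > 0" using False by simp
    have "v = norm v *\<^sub>R e" "r = norm v * (r / norm v)" using nv unfolding e_def by auto
    then have "Wc K1 g1 v r = Wc K1 g1 e (r / norm v)" "Wc K2 g2 v r = Wc K2 g2 e (r / norm v)"
      using Wc_scale[OF nv] by metis+
    then show ?thesis using unit[OF ne] by simp
  next
    case True
    obtain e :: 'a where e: "e \<in> Basis" using nonempty_Basis by blast
    have ne: "norm e = 1" using e by simp
    have fK1: "finite K1" and fK2: "finite K2" using sc1 sc2 unfolding simplicial_complex_def by auto
    define U where "U = \<Union>K1 \<union> \<Union>K2"
    have fU: "finite U" unfolding U_def using fK1 fK2 sc_simplex[OF sc1] sc_simplex[OF sc2] by blast
    define R where "R = (\<Sum>u\<in>U. norm u)"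
    have eR: "e \<bullet> u \<le> R" if "u \<in> U" for u
    proof -
      have "e \<bullet> u \<le> norm u" using Basis_le_norm[OF e, of u] by (simp add: inner_commute)
      also have "norm u \<le> R" unfolding R_def using member_le_sum[OF that, of norm] fU by simp
      finally show ?thesis .
    qed
    have tot: "Wc K g e R = (\<Sum>S\<in>K. (-1) ^ (card S - 1) * int (g S))"
      if "K = K1 \<and> g = g1 \<or> K = K2 \<and> g = g2" for K g
      unfolding Wc_def using that eR unfolding U_def by (intro sum.cong) auto
    have zero: "Wc K g 0 r = (if 0 \<le> r then (\<Sum>S\<in>K. (-1) ^ (card S - 1) * int (g S)) else 0)"
      if "simplicial_complex K" for K :: "'a set set" and g
    proof -
      have "\<forall>S\<in>K. S \<noteq> {}" using sc_simplex[OF that] by blast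
      then show ?thesis unfolding Wc_def by (cases "0 \<le> r") auto
    qed
    have "Wc K1 g1 e R = Wc K2 g2 e R" using unit[OF ne] .
    then show ?thesis using True zero[OF sc1] zero[OF sc2] tot by auto
  qed
qed

lemma Dopen_eq:
  fixes K1 K2 :: "'a::euclidean_space set set"
  assumes w1: "weighted_complex K1 g1" and w2: "weighted_complex K2 g2"
    and hyp: "\<forall>v\<in>sphere 0 1. \<forall>r. WECT K1 g1 v r = WECT K2 g2 v r"
  shows "Dopen K1 g1 v r = Dopen K2 g2 v r"
proof -
  have sc1: "simplicial_complex K1" and sc2: "simplicial_complex K2"
    using w1 w2 unfolding weighted_complex_def by auto
  have fK1: "finite K1" and fK2: "finite K2" using sc1 sc2 unfolding simplicial_complex_def by auto
  define U where "U = \<Union>K1 \<union> \<Union>K2"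
  have fU: "finite U" unfolding U_def using fK1 fK2 sc_simplex[OF sc1] sc_simplex[OF sc2] by blast
  obtain \<epsilon> where \<epsilon>: "\<epsilon> > 0" and \<epsilon>b: "\<forall>u\<in>{u\<in>U. v \<bullet> u < r}. \<epsilon> \<le> r - v \<bullet> u"
    using fin_pos_lb[of "{u\<in>U. v \<bullet> u < r}" "\<lambda>u. r - v \<bullet> u"] fU by auto
  have conv: "Dopen K g v r = - Wc K g v (r - \<epsilon>)"
    if "simplicial_complex K" "K = K1 \<or> K = K2" for K :: "'a set set" and g
  proof -
    have "Dopen K g v r = (\<Sum>S\<in>K. - ((-1) ^ (card S - 1) * int (g S) * (if \<forall>u\<in>S. v \<bullet> u \<le> r - \<epsilon> then 1 else 0)))"
      unfolding Dopen_def
    proof (rule sum.cong[OF refl])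
      fix S assume S: "S \<in> K"
      have SU: "S \<subseteq> U" unfolding U_def using that(2) S by blast
      have "(\<forall>u\<in>S. v \<bullet> u < r) \<longleftrightarrow> (\<forall>u\<in>S. v \<bullet> u \<le> r - \<epsilon>)"
        using SU \<epsilon>b \<epsilon> by force
      then show "wsd (convex hull S) * int (g S) * (if convex hull S \<subseteq> {y. v \<bullet> y < r} then 1 else 0) =
          - ((-1) ^ (card S - 1) * int (g S) * (if \<forall>u\<in>S. v \<bullet> u \<le> r - \<epsilon> then 1 else 0))"
        using wsd_simplex[OF sc_simplex[OF that(1) S]] hull_sub_open[of S v r] by simp
    qed
    also have "\<dots> = - Wc K g v (r - \<epsilon>)" unfolding Wc_def by (simp add: sum_negf)
    finally show ?thesis .
  qed
  show ?thesis using conv[OF sc1] conv[OF sc2] Wc_all[OF w1 w2 hyp] by simp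
qed

theorem mainTheorem2:
  fixes K1 K2 :: "'a::euclidean_space set set"
    and g1 g2 :: "'a set \<Rightarrow> nat"
  assumes "weighted_complex K1 g1"
    and "weighted_complex K2 g2"
    and "\<forall>v\<in>sphere 0 1. \<forall>r. WECT K1 g1 v r = WECT K2 g2 v r"
  shows "(\<forall>x. assoc_fun K1 g1 x = assoc_fun K2 g2 x)
         \<and> underlying_space K1 = underlying_space K2"
proof -
  note w1 = assms(1) and w2 = assms(2) and hyp = assms(3)
  have sc1: "simplicial_complex K1" and sc2: "simplicial_complex K2"
    using w1 w2 unfolding weighted_complex_def by auto
  have fK1: "finite K1" and fK2: "finite K2" using sc1 sc2 unfolding simplicial_complex_def by auto
  define K where "K = K1 \<union> K2"
  have fK: "finite K" unfolding K_def using fK1 fK2 by simp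
  have simK: "finite S \<and> S \<noteq> {} \<and> \<not> affine_dependent S" if "S \<in> K" for S
    using that sc_simplex[OF sc1] sc_simplex[OF sc2] unfolding K_def by blast
  have polyK: "polytope (convex hull S)" if "S \<in> K" for S
    using simK[OF that] polytope_convex_hull by blast
  have neK: "convex hull S \<noteq> {}" if "S \<in> K" for S using simK[OF that] by simp
  have "\<forall>S\<in>K. \<exists>hs. \<forall>x\<in>rel_interior (convex hull S). cell hs x \<subseteq> rel_interior (convex hull S)"
    using hs_exists polyK by blast
  from bchoice[OF this] obtain HS where HS:
    "\<forall>S\<in>K. \<forall>x\<in>rel_interior (convex hull S). cell (HS S) x \<subseteq> rel_interior (convex hull S)" ..
  obtain hs where hs: "set hs = (\<Union>S\<in>K. set (HS S))"
    using finite_list[of "\<Union>S\<in>K. set (HS S)"] fK by blast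
  have hsP: "cell hs x \<subseteq> rel_interior (convex hull S)" if "S \<in> K" "x \<in> rel_interior (convex hull S)" for S x
  proof -
    have "cell hs x \<subseteq> cell (HS S) x" by (rule cell_mono) (use hs that(1) in blast)
    also have "\<dots> \<subseteq> rel_interior (convex hull S)" using HS that by blast
    finally show ?thesis .
  qed
  define Cells where "Cells = (\<Union>S\<in>K. cellsP (convex hull S) hs)"
  have cPeq: "cellsP (convex hull S) hs = cell hs ` rel_interior (convex hull S)" if "S \<in> K" for S
  proof -
    have "rel_interior (convex hull S) \<inter> cell hs x = cell hs x" if "x \<in> rel_interior (convex hull S)" for x
      using hsP[OF \<open>S \<in> K\<close> that] by blast
    then show ?thesis unfolding cellsP_def by auto
  qed
  have val: "finite (cellsP (convex hull S) hs) \<and>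
    (\<forall>C\<in>cellsP (convex hull S) hs. convex C \<and> rel_interior C = C \<and> C \<noteq> {} \<and> polytope (closure C) \<and> C \<subseteq> rel_interior (convex hull S)) \<and>
    (\<Sum>C\<in>cellsP (convex hull S) hs. wsd C * (if closure C \<subseteq> {y. v \<bullet> y < r} then 1 else 0)) =
      wsd (convex hull S) * (if convex hull S \<subseteq> {y. v \<bullet> y < r} then 1 else 0)" if "S \<in> K" for S v r
    using valuation[OF polyK[OF that] neK[OF that]] by blast
  have finCells: "finite Cells" unfolding Cells_def using fK val by blast
  have invC: "convex C \<and> rel_interior C = C \<and> C \<noteq> {} \<and> polytope (closure C)" if "C \<in> Cells" for C
    using that val unfolding Cells_def by blast
  have cellC: "C = cell hs y" if Cy: "C \<in> Cells" "y \<in> C" for C y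
  proof -
    obtain S where S: "S \<in> K" "C \<in> cellsP (convex hull S) hs" using Cy(1) unfolding Cells_def by blast
    then obtain x where "C = cell hs x" using cPeq by blast
    then show ?thesis using cell_eq Cy(2) by blast
  qed
  have subiff: "C \<subseteq> rel_interior (convex hull S) \<longleftrightarrow> C \<in> cellsP (convex hull S) hs"
    if CS: "C \<in> Cells" "S \<in> K" for C S
  proof
    assume sub: "C \<subseteq> rel_interior (convex hull S)"
    obtain y where y: "y \<in> C" using invC[OF CS(1)] by blast
    have "C = cell hs y" using cellC[OF CS(1) y] .
    then show "C \<in> cellsP (convex hull S) hs" using cPeq[OF CS(2)] sub y by blast
  next
    assume "C \<in> cellsP (convex hull S) hs"
    then show "C \<subseteq> rel_interior (convex hull S)" using val[OF CS(2)] by blast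
  qed
  have ricl: "rel_interior (closure C) = C" if "C \<in> Cells" for C
    using convex_rel_interior_closure[of C] invC[OF that] by simp
  have injcl: "inj_on closure Cells"
  proof (rule inj_onI)
    fix C1 C2 assume "C1 \<in> Cells" "C2 \<in> Cells" "closure C1 = closure C2"
    then show "C1 = C2" using ricl by metis
  qed
  define F where "F = closure ` Cells"
  define c where "c Q = int (\<Sum>S\<in>{S\<in>K1. rel_interior Q \<subseteq> rel_interior (convex hull S)}. g1 S)
      - int (\<Sum>S\<in>{S\<in>K2. rel_interior Q \<subseteq> rel_interior (convex hull S)}. g2 S)" for Q
  have part: "(\<Sum>C\<in>Cells. wsd C * int (\<Sum>S\<in>{S\<in>Ki. C \<subseteq> rel_interior (convex hull S)}. gi S) *
        (if closure C \<subseteq> {y. v \<bullet> y < r} then 1 else 0)) = Dopen Ki gi v r"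
    if Ki: "Ki \<subseteq> K" for Ki :: "'a set set" and gi v r
  proof -
    have fKi: "finite Ki" using fK Ki finite_subset by blast
    define ind where "ind X = (if X \<subseteq> {y. v \<bullet> y < r} then 1 else 0 :: int)" for X
    have "(\<Sum>C\<in>Cells. wsd C * int (\<Sum>S\<in>{S\<in>Ki. C \<subseteq> rel_interior (convex hull S)}. gi S) *
        (if closure C \<subseteq> {y. v \<bullet> y < r} then 1 else 0))
      = (\<Sum>C\<in>Cells. \<Sum>S\<in>Ki. (if C \<subseteq> rel_interior (convex hull S) then int (gi S) * (wsd C * ind (closure C)) else 0))"
    proof (rule sum.cong[OF refl])
      fix C assume "C \<in> Cells"
      have e1: "int (\<Sum>S\<in>{S\<in>Ki. C \<subseteq> rel_interior (convex hull S)}. gi S) =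
          (\<Sum>S\<in>Ki. if C \<subseteq> rel_interior (convex hull S) then int (gi S) else 0)"
        by (simp add: sum.inter_filter[OF fKi] of_nat_sum if_distrib cong: if_cong)
      have e2: "wsd C * (\<Sum>S\<in>Ki. if C \<subseteq> rel_interior (convex hull S) then int (gi S) else 0) * ind (closure C)
          = (\<Sum>S\<in>Ki. if C \<subseteq> rel_interior (convex hull S) then int (gi S) else 0) * (wsd C * ind (closure C))"
        by (simp add: mult_ac)
      show "wsd C * int (\<Sum>S\<in>{S\<in>Ki. C \<subseteq> rel_interior (convex hull S)}. gi S) *
        (if closure C \<subseteq> {y. v \<bullet> y < r} then 1 else 0) =
        (\<Sum>S\<in>Ki. (if C \<subseteq> rel_interior (convex hull S) then int (gi S) * (wsd C * ind (closure C)) else 0))"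
        unfolding ind_def[symmetric] e1 e2 sum_distrib_right by (rule sum.cong[OF refl]) simp
    qed
    also have "\<dots> = (\<Sum>S\<in>Ki. \<Sum>C\<in>Cells. (if C \<subseteq> rel_interior (convex hull S) then int (gi S) * (wsd C * ind (closure C)) else 0))"
      by (rule sum.swap)
    also have "\<dots> = (\<Sum>S\<in>Ki. wsd (convex hull S) * int (gi S) * ind (convex hull S))"
    proof (rule sum.cong[OF refl])
      fix S assume S: "S \<in> Ki"
      then have SK: "S \<in> K" using Ki by blast
      have seteq: "{C\<in>Cells. C \<subseteq> rel_interior (convex hull S)} = cellsP (convex hull S) hs"
      proof
        show "{C\<in>Cells. C \<subseteq> rel_interior (convex hull S)} \<subseteq> cellsP (convex hull S) hs"
          using subiff[OF _ SK] by blast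
        show "cellsP (convex hull S) hs \<subseteq> {C\<in>Cells. C \<subseteq> rel_interior (convex hull S)}"
          using val[OF SK] SK unfolding Cells_def by blast
      qed
      have "(\<Sum>C\<in>Cells. (if C \<subseteq> rel_interior (convex hull S) then int (gi S) * (wsd C * ind (closure C)) else 0))
          = (\<Sum>C\<in>{C\<in>Cells. C \<subseteq> rel_interior (convex hull S)}. int (gi S) * (wsd C * ind (closure C)))"
        by (rule sum.inter_filter[OF finCells, symmetric])
      also have "\<dots> = int (gi S) * (\<Sum>C\<in>cellsP (convex hull S) hs. wsd C * ind (closure C))"
        unfolding seteq by (simp add: sum_distrib_left)
      also have "\<dots> = int (gi S) * (wsd (convex hull S) * ind (convex hull S))"
        using val[OF SK, of v r] unfolding ind_def by simp
      finally show "(\<Sum>C\<in>Cells. (if C \<subseteq> rel_interior (convex hull S) then int (gi S) * (wsd C * ind (closure C)) else 0))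
          = wsd (convex hull S) * int (gi S) * ind (convex hull S)" by (simp add: mult_ac)
    qed
    also have "\<dots> = Dopen Ki gi v r" unfolding Dopen_def ind_def ..
    finally show ?thesis .
  qed
  have data: "\<forall>v r. wdat F c v r = 0"
  proof (intro allI)
    fix v :: 'a and r :: real
    define ind where "ind X = (if X \<subseteq> {y. v \<bullet> y < r} then 1 else 0 :: int)" for X
    define A1 where "A1 C = int (\<Sum>S\<in>{S\<in>K1. C \<subseteq> rel_interior (convex hull S)}. g1 S)" for C
    define A2 where "A2 C = int (\<Sum>S\<in>{S\<in>K2. C \<subseteq> rel_interior (convex hull S)}. g2 S)" for C
    have "wdat F c v r = (\<Sum>C\<in>Cells. wsd (closure C) * c (closure C) * ind (closure C))"
      unfolding wdat_def F_def ind_def by (simp add: sum.reindex[OF injcl])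
    also have "\<dots> = (\<Sum>C\<in>Cells. wsd C * A1 C * ind (closure C) - wsd C * A2 C * ind (closure C))"
    proof (rule sum.cong[OF refl])
      fix C assume C: "C \<in> Cells"
      have cc: "c (closure C) = A1 C - A2 C" unfolding c_def A1_def A2_def ricl[OF C] ..
      show "wsd (closure C) * c (closure C) * ind (closure C) = wsd C * A1 C * ind (closure C) - wsd C * A2 C * ind (closure C)"
        unfolding cc wsd_closure by (simp add: algebra_simps)
    qed
    also have "\<dots> = Dopen K1 g1 v r - Dopen K2 g2 v r"
      unfolding sum_subtractf using part[of K1 g1 v r] part[of K2 g2 v r] unfolding A1_def A2_def ind_def K_def by simp
    also have "\<dots> = 0" using Dopen_eq[OF w1 w2 hyp] by simp
    finally show "wdat F c v r = 0" .
  qed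
  have finF: "finite F" unfolding F_def using finCells by simp
  have polyF: "\<forall>Q\<in>F. polytope Q" unfolding F_def using invC by blast
  have disjF: "\<forall>Q1\<in>F. \<forall>Q2\<in>F. Q1 \<noteq> Q2 \<longrightarrow> rel_interior Q1 \<inter> rel_interior Q2 = {}"
  proof (intro ballI impI)
    fix Q1 Q2 assume "Q1 \<in> F" "Q2 \<in> F" "Q1 \<noteq> Q2"
    then obtain C1 C2 where C: "C1 \<in> Cells" "C2 \<in> Cells" "Q1 = closure C1" "Q2 = closure C2" "C1 \<noteq> C2"
      unfolding F_def by blast
    show "rel_interior Q1 \<inter> rel_interior Q2 = {}"
    proof (rule ccontr)
      assume "rel_interior Q1 \<inter> rel_interior Q2 \<noteq> {}"
      then obtain y where "y \<in> C1" "y \<in> C2" using ricl C by auto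
      then have "C1 = cell hs y" "C2 = cell hs y" using cellC C by blast+
      then show False using C(5) by simp
    qed
  qed
  have c0: "\<forall>Q\<in>F. c Q = 0" by (rule coreA[OF finF polyF disjF data])
  have eqx: "assoc_fun K1 g1 x = assoc_fun K2 g2 x" for x
  proof (cases "\<exists>S\<in>K. x \<in> rel_interior (convex hull S)")
    case True
    then obtain S0 where S0: "S0 \<in> K" "x \<in> rel_interior (convex hull S0)" by blast
    define C where "C = cell hs x"
    have CC: "C \<in> Cells" unfolding Cells_def C_def using cPeq[OF S0(1)] S0 by blast
    have "closure C \<in> F" unfolding F_def using CC by blast
    then have "c (closure C) = 0" using c0 by blast
    moreover have seteq: "{S\<in>Ki. C \<subseteq> rel_interior (convex hull S)} = {S\<in>Ki. x \<in> rel_interior (convex hull S)}"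
      if "Ki \<subseteq> K" for Ki
    proof
      show "{S\<in>Ki. C \<subseteq> rel_interior (convex hull S)} \<subseteq> {S\<in>Ki. x \<in> rel_interior (convex hull S)}"
        using cell_self[of x hs] unfolding C_def by blast
      show "{S\<in>Ki. x \<in> rel_interior (convex hull S)} \<subseteq> {S\<in>Ki. C \<subseteq> rel_interior (convex hull S)}"
        using hsP that unfolding C_def by blast
    qed
    ultimately have "int (assoc_fun K1 g1 x) - int (assoc_fun K2 g2 x) = 0"
      unfolding c_def ricl[OF CC] assoc_sum[OF sc1] assoc_sum[OF sc2]
      using seteq[of K1] seteq[of K2] unfolding K_def by simp
    then show ?thesis by simp
  next
    case False
    then have e1: "{S\<in>K1. x \<in> rel_interior (convex hull S)} = {}" and e2: "{S\<in>K2. x \<in> rel_interior (convex hull S)} = {}"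
      unfolding K_def by blast+
    show ?thesis unfolding assoc_sum[OF sc1] assoc_sum[OF sc2] e1 e2 by simp
  qed
  have "underlying_space K1 = underlying_space K2"
  proof -
    have "x \<in> underlying_space K1 \<longleftrightarrow> x \<in> underlying_space K2" for x
      using assoc_ne0[OF w1, of x] assoc_ne0[OF w2, of x] eqx[of x] by simp
    then show ?thesis by blast
  qed
  then show ?thesis using eqx by blast
qed

end
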